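(* Let $G$ be a distribution of $\theta=(\theta_1,\theta_2)$ with bounded support, where $\theta_2=p\in[0,1]$, and let $(\theta_i,Y_i)$, $i=1,\dots,n$, be i.i.d., $Y_i=(X_i,K_i)$, with $X_i\mid K_i,\theta_i\sim B(K_i,p_i)$ and either (i) (binomial sampling) $\theta_1=\pi\in[0,1]$ and $K_i\mid\theta_i\sim B(\kappa,\pi_i)$ for a fixed integer $\kappa\ge1$, or (ii) (Poisson sampling) $\theta_1=\lambda\ge0$ and $K_i\mid\theta_i\sim\mathrm{Poisson}(\lambda_i)$. Assume $G$ satisfies: for a sequence $\varepsilon_n\to0$ and $S_n=\{y:P_G(Y=y)\ge\varepsilon_n/n\}$, (a) $P_G(Y\in S_n)=1-o(1/n)$ and (b) for $\varepsilon_n\to0$ sufficiently slowly $|S_n|=O(\log n)$. Let $\hat G$ be a generalized maximum likelihood estimator of $G$ based on $Y_1,\dots,Y_n$, let $\hat\eta=E_{\hat G}\Theta_2$, and let $\tilde\eta^*=\frac1n\sum_i\Psi^*(Y_i)$ where $\Psi^*(X,K)=X/K$ if $K>0$ and $\Psi^*(X,K)=E_{\hat G}(\Theta_2\mid K=0)$ if $K=0$. Then in case (i), $\tilde\eta^*-\hat\eta=O_p(1/\sqrt n)$, and in case (ii), $\tilde\eta^*-\hat\eta=o_p\big((\log n)^{(1+\alpha)/2}/\sqrt n\big)$ for every $\alpha>0$.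
   Context: A GMLE $\hat G$ maximizes $\prod_i\int f_\theta(Y_i)\,d\tilde G(\theta)$ over probability distributions $\tilde G$, where $f_\theta$ is the conditional mass function of $(X,K)$ given $\theta$. $E_{\hat G}(\Theta_2\mid K=0)$ is the conditional mean of $p$ given $K=0$ when $\Theta\sim\hat G$ and $(X,K)\mid\Theta\sim f_\Theta$. *)

theory Defs
  imports "HOL-Probability.Probability" "HOL-Library.Landau_Symbols"
begin

text \<open>Sampling scheme for K given theta1: binomial with fixed kappa, or Poisson.\<close>
datatype sampling = BinomS nat | PoisS

fun param_space :: "sampling \<Rightarrow> (real \<times> real) set" where
  "param_space (BinomS \<kappa>) = {0..1} \<times> {0..1}"
| "param_space PoisS = {0..} \<times> {0..1}"

fun kdens :: "sampling \<Rightarrow> real \<Rightarrow> nat \<Rightarrow> real" where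
  "kdens (BinomS \<kappa>) l k =
     (if k \<le> \<kappa> then real (\<kappa> choose k) * l ^ k * (1 - l) ^ (\<kappa> - k) else 0)"
| "kdens PoisS l k = exp (- l) * l ^ k / fact k"

definition binom_dens :: "nat \<Rightarrow> real \<Rightarrow> nat \<Rightarrow> real" where
  "binom_dens k p x = (if x \<le> k then real (k choose x) * p ^ x * (1 - p) ^ (k - x) else 0)"

text \<open>f_theta(x,k): conditional mass function of Y = (X,K) given theta.\<close>
definition fdens :: "sampling \<Rightarrow> real \<times> real \<Rightarrow> nat \<times> nat \<Rightarrow> real" where
  "fdens s \<theta> y = kdens s (fst \<theta>) (snd y) * binom_dens (snd y) (snd \<theta>) (fst y)"

definition mix :: "sampling \<Rightarrow> (real \<times> real) measure \<Rightarrow> nat \<times> nat \<Rightarrow> real" where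
  "mix s G y = (\<integral>\<theta>. fdens s \<theta> y \<partial>G)"

definition lik :: "sampling \<Rightarrow> (real \<times> real) measure \<Rightarrow> (nat \<times> nat) list \<Rightarrow> real" where
  "lik s G ys = (\<Prod>y\<leftarrow>ys. mix s G y)"

definition is_param_dist :: "sampling \<Rightarrow> (real \<times> real) measure \<Rightarrow> bool" where
  "is_param_dist s G \<longleftrightarrow> prob_space G \<and> sets G = sets borel \<and> (AE \<theta> in G. \<theta> \<in> param_space s)"

definition is_GMLE :: "sampling \<Rightarrow> (nat \<times> nat) list \<Rightarrow> (real \<times> real) measure \<Rightarrow> bool" where
  "is_GMLE s ys Gh \<longleftrightarrow> is_param_dist s Gh \<and>
     (\<forall>G'. is_param_dist s G' \<longrightarrow> lik s G' ys \<le> lik s Gh ys)"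

definition eta_hat :: "(real \<times> real) measure \<Rightarrow> real" where
  "eta_hat G = (\<integral>\<theta>. snd \<theta> \<partial>G)"

text \<open>E_G(Theta_2 | K = 0).\<close>
definition cond_mean_K0 :: "sampling \<Rightarrow> (real \<times> real) measure \<Rightarrow> real" where
  "cond_mean_K0 s G =
     (\<integral>\<theta>. snd \<theta> * kdens s (fst \<theta>) 0 \<partial>G) / (\<integral>\<theta>. kdens s (fst \<theta>) 0 \<partial>G)"

definition Psi_star :: "sampling \<Rightarrow> (real \<times> real) measure \<Rightarrow> nat \<times> nat \<Rightarrow> real" where
  "Psi_star s G y = (if snd y > 0 then real (fst y) / real (snd y) else cond_mean_K0 s G)"

definition eta_tilde :: "sampling \<Rightarrow> (real \<times> real) measure \<Rightarrow> (nat \<times> nat) list \<Rightarrow> real" where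
  "eta_tilde s G ys = (\<Sum>y\<leftarrow>ys. Psi_star s G y) / real (length ys)"

text \<open>Probability that (Y_1,...,Y_n), i.i.d. with mass mix s G, lies in A.\<close>
definition data_prob :: "sampling \<Rightarrow> (real \<times> real) measure \<Rightarrow> nat \<Rightarrow> (nat \<times> nat) list set \<Rightarrow> real" where
  "data_prob s G n A = infsum (lik s G) {ys \<in> A. length ys = n}"

definition bigOp :: "sampling \<Rightarrow> (real \<times> real) measure \<Rightarrow> (nat \<Rightarrow> (nat \<times> nat) list \<Rightarrow> real) \<Rightarrow> (nat \<Rightarrow> real) \<Rightarrow> bool" where
  "bigOp s G Z a \<longleftrightarrow> (\<forall>\<epsilon>>0. \<exists>M N. \<forall>n\<ge>N. data_prob s G n {ys. \<bar>Z n ys\<bar> > M * a n} < \<epsilon>)"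

definition littleOp :: "sampling \<Rightarrow> (real \<times> real) measure \<Rightarrow> (nat \<Rightarrow> (nat \<times> nat) list \<Rightarrow> real) \<Rightarrow> (nat \<Rightarrow> real) \<Rightarrow> bool" where
  "littleOp s G Z a \<longleftrightarrow> (\<forall>\<delta>>0. \<forall>\<epsilon>>0. \<exists>N. \<forall>n\<ge>N. data_prob s G n {ys. \<bar>Z n ys\<bar> > \<delta> * a n} < \<epsilon>)"

end

theory Submission
  imports Defs
begin

lemma binom_dens_nonneg: "p \<in> {0..1} \<Longrightarrow> 0 \<le> binom_dens k p x"
  by (auto simp: binom_dens_def)

lemma binom_dens_sum: "p \<in> {0..1} \<Longrightarrow> (\<Sum>x\<le>k. binom_dens k p x) = 1"
proof -
  have "(\<Sum>x\<le>k. binom_dens k p x) = (\<Sum>x\<le>k. real (k choose x) * p ^ x * (1 - p) ^ (k - x))"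
    by (auto simp: binom_dens_def)
  also have "\<dots> = (p + (1 - p)) ^ k" by (subst binomial_ring) (simp add: atLeast0AtMost)
  finally show ?thesis by simp
qed

lemma binom_dens_mean: "(\<Sum>x\<le>k. real x * binom_dens k p x) = real k * p"
proof (cases k)
  case 0 then show ?thesis by (simp add: binom_dens_def)
next
  case (Suc m)
  have "(\<Sum>x\<le>Suc m. real x * binom_dens (Suc m) p x) = (\<Sum>x\<le>m. real (Suc x) * binom_dens (Suc m) p (Suc x))"
    by (subst sum.atMost_Suc_shift) simp
  also have "\<dots> = (\<Sum>x\<le>m. real (Suc m) * p * (real (m choose x) * p ^ x * (1 - p) ^ (m - x)))"
  proof (rule sum.cong[OF refl])
    fix x assume x: "x \<in> {..m}"
    have e: "real (Suc x) * real (Suc m choose Suc x) = real (Suc m) * real (m choose x)"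
      using Suc_times_binomial[of x m] by (metis of_nat_mult)
    have "real (Suc x) * binom_dens (Suc m) p (Suc x) = (real (Suc x) * real (Suc m choose Suc x)) * p ^ Suc x * (1 - p) ^ (m - x)"
      using x by (simp add: binom_dens_def)
    also have "\<dots> = real (Suc m) * p * (real (m choose x) * p ^ x * (1 - p) ^ (m - x))"
      by (simp only: e) (simp add: algebra_simps)
    finally show "real (Suc x) * binom_dens (Suc m) p (Suc x) = real (Suc m) * p * (real (m choose x) * p ^ x * (1 - p) ^ (m - x))" .
  qed
  also have "\<dots> = real (Suc m) * p * (p + (1 - p)) ^ m"
    by (subst binomial_ring) (simp add: atLeast0AtMost sum_distrib_left)
  finally show ?thesis using Suc by simp
qed

lemma kdens_nonneg: "l \<in> fst ` param_space s \<Longrightarrow> 0 \<le> kdens s l k"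
  by (cases s) auto

lemma kdens_sums: "l \<in> fst ` param_space s \<Longrightarrow> (\<lambda>k. kdens s l k) sums 1"
proof (cases s)
  case (BinomS \<kappa>)
  assume l: "l \<in> fst ` param_space s"
  have "(\<lambda>k. kdens s l k) sums (\<Sum>k\<le>\<kappa>. kdens s l k)"
    by (rule sums_finite) (auto simp: BinomS)
  also have "(\<Sum>k\<le>\<kappa>. kdens s l k) = (l + (1 - l)) ^ \<kappa>"
    by (subst binomial_ring) (simp add: atLeast0AtMost BinomS)
  finally show ?thesis by simp
next
  case PoisS
  have "(\<lambda>k. exp (- l) * (l ^ k /\<^sub>R fact k)) sums (exp (-l) * exp l)"
    by (intro sums_mult exp_converges)
  moreover have "exp (- l) * (l ^ k /\<^sub>R fact k) = kdens s l k" for k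
    by (simp add: PoisS divide_inverse mult.commute)
  moreover have "exp (- l) * exp l = 1" by (simp add: exp_minus_inverse mult.commute)
  ultimately show ?thesis by simp
qed

lemma kdens_partial: "l \<in> fst ` param_space s \<Longrightarrow> finite I \<Longrightarrow> sum (kdens s l) I \<le> 1"
  using sum_le_suminf[of "kdens s l" I] kdens_sums[of l s] kdens_nonneg[of l s]
  by (simp add: sums_iff)

lemma kdens_le1: "l \<in> fst ` param_space s \<Longrightarrow> kdens s l k \<le> 1"
  using kdens_partial[of l s "{k}"] by simp

definition psi_th :: "real \<Rightarrow> nat \<times> nat \<Rightarrow> real" where
  "psi_th p y = (if snd y > 0 then real (fst y) / real (snd y) else p)"

lemma param_fst: "\<theta> \<in> param_space s \<Longrightarrow> fst \<theta> \<in> fst ` param_space s" by auto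
lemma param_snd: "\<theta> \<in> param_space s \<Longrightarrow> snd \<theta> \<in> {0..1}" by (cases s) auto

lemma binom_dens_zero: "x > k \<Longrightarrow> binom_dens k p x = 0" by (simp add: binom_dens_def)

lemma fdens_nonneg: "\<theta> \<in> param_space s \<Longrightarrow> 0 \<le> fdens s \<theta> y"
  unfolding fdens_def using kdens_nonneg[OF param_fst] binom_dens_nonneg[OF param_snd] by simp

lemma fdens_zero: "fst y > snd y \<Longrightarrow> fdens s \<theta> y = 0"
  by (simp add: fdens_def binom_dens_zero)

lemma binom_psi_sum: "(\<Sum>x\<le>k. binom_dens k p x * psi_th p (x, k)) = p"
proof (cases "k = 0")
  case True then show ?thesis by (simp add: binom_dens_def psi_th_def)
next
  case False
  have "(\<Sum>x\<le>k. binom_dens k p x * psi_th p (x, k)) = (\<Sum>x\<le>k. real x * binom_dens k p x) / real k"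
    using False by (simp add: psi_th_def sum_divide_distrib mult.commute)
  also have "\<dots> = p" using False by (simp add: binom_dens_mean)
  finally show ?thesis .
qed

lemma binom_1psi_sum: "p \<in> {0..1} \<Longrightarrow> (\<Sum>x\<le>k. binom_dens k p x * (1 - psi_th p (x, k))) = 1 - p"
  using binom_psi_sum[of k p] binom_dens_sum[of p k]
  by (simp add: algebra_simps sum_subtractf)

lemma sum_square_fdens:
  "(\<Sum>y\<in>{..K}\<times>{..K}. fdens s \<theta> y * h y) = (\<Sum>k\<le>K. kdens s (fst \<theta>) k * (\<Sum>x\<le>k. binom_dens k (snd \<theta>) x * h (x, k)))"
proof -
  have "(\<Sum>y\<in>{..K}\<times>{..K}. fdens s \<theta> y * h y) = (\<Sum>x\<le>K. \<Sum>k\<le>K. fdens s \<theta> (x,k) * h (x,k))"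
    by (simp add: sum.cartesian_product)
  also have "\<dots> = (\<Sum>k\<le>K. \<Sum>x\<le>K. fdens s \<theta> (x,k) * h (x,k))" by (rule sum.swap)
  also have "\<dots> = (\<Sum>k\<le>K. kdens s (fst \<theta>) k * (\<Sum>x\<le>k. binom_dens k (snd \<theta>) x * h (x, k)))"
  proof (rule sum.cong[OF refl])
    fix k assume k: "k \<in> {..K}"
    have "(\<Sum>x\<le>K. fdens s \<theta> (x,k) * h (x,k)) = (\<Sum>x\<le>k. fdens s \<theta> (x,k) * h (x,k))"
      using k by (intro sum.mono_neutral_right) (auto simp: fdens_def binom_dens_zero)
    then show "(\<Sum>x\<le>K. fdens s \<theta> (x,k) * h (x,k)) = kdens s (fst \<theta>) k * (\<Sum>x\<le>k. binom_dens k (snd \<theta>) x * h (x, k))"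
      by (simp add: fdens_def sum_distrib_left mult.assoc)
  qed
  finally show ?thesis .
qed

lemma finite_in_square: "finite (S :: (nat \<times> nat) set) \<Longrightarrow> \<exists>K. S \<subseteq> {..K}\<times>{..K}"
proof -
  assume "finite S"
  then obtain K where "\<forall>y\<in>S. fst y \<le> K \<and> snd y \<le> K"
    using finite_nat_set_iff_bounded_le[of "fst ` S \<union> snd ` S"] by auto
  then show ?thesis by (intro exI[of _ K]) (auto simp: subset_iff)
qed

lemma psi_le1: "\<theta> \<in> param_space s \<Longrightarrow> fdens s \<theta> y \<noteq> 0 \<Longrightarrow> psi_th (snd \<theta>) y \<le> 1"
  using param_snd[of \<theta> s] fdens_zero[of y s \<theta>] by (cases y) (force simp: psi_th_def not_less)

lemma psi_nonneg: "\<theta> \<in> param_space s \<Longrightarrow> 0 \<le> psi_th (snd \<theta>) y"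
  using param_snd[of \<theta> s] by (auto simp: psi_th_def)

lemma fdens_psi_sum_le:
  assumes th: "\<theta> \<in> param_space s" and S: "finite S"
  shows "(\<Sum>y\<in>S. fdens s \<theta> y * psi_th (snd \<theta>) y) \<le> snd \<theta>"
proof -
  obtain K where K: "S \<subseteq> {..K}\<times>{..K}" using finite_in_square[OF S] by blast
  have "(\<Sum>y\<in>S. fdens s \<theta> y * psi_th (snd \<theta>) y) \<le> (\<Sum>y\<in>{..K}\<times>{..K}. fdens s \<theta> y * psi_th (snd \<theta>) y)"
    using K by (intro sum_mono2) (auto intro!: mult_nonneg_nonneg fdens_nonneg[OF th] psi_nonneg[OF th])
  also have "\<dots> = (\<Sum>k\<le>K. kdens s (fst \<theta>) k * snd \<theta>)"
    by (simp add: sum_square_fdens binom_psi_sum)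
  also have "\<dots> = snd \<theta> * (\<Sum>k\<le>K. kdens s (fst \<theta>) k)" by (simp add: sum_distrib_left mult.commute)
  also have "\<dots> \<le> snd \<theta> * 1"
    using param_snd[OF th] kdens_partial[OF param_fst[OF th]] by (intro mult_left_mono) auto
  finally show ?thesis by simp
qed

lemma fdens_1psi_sum_le:
  assumes th: "\<theta> \<in> param_space s" and S: "finite S"
  shows "(\<Sum>y\<in>S. fdens s \<theta> y * (1 - psi_th (snd \<theta>) y)) \<le> 1 - snd \<theta>"
proof -
  obtain K where K: "S \<subseteq> {..K}\<times>{..K}" using finite_in_square[OF S] by blast
  have nn: "0 \<le> fdens s \<theta> y * (1 - psi_th (snd \<theta>) y)" for y
    using fdens_nonneg[OF th, of y] psi_le1[OF th, of y] by (cases "fdens s \<theta> y = 0") auto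
  have "(\<Sum>y\<in>S. fdens s \<theta> y * (1 - psi_th (snd \<theta>) y)) \<le> (\<Sum>y\<in>{..K}\<times>{..K}. fdens s \<theta> y * (1 - psi_th (snd \<theta>) y))"
    using K by (intro sum_mono2) (auto intro!: nn)
  also have "\<dots> = (\<Sum>k\<le>K. kdens s (fst \<theta>) k * (1 - snd \<theta>))"
    using param_snd[OF th] by (simp add: sum_square_fdens binom_1psi_sum)
  also have "\<dots> = (1 - snd \<theta>) * (\<Sum>k\<le>K. kdens s (fst \<theta>) k)" by (simp add: sum_distrib_left mult.commute)
  also have "\<dots> \<le> (1 - snd \<theta>) * 1"
    using param_snd[OF th] kdens_partial[OF param_fst[OF th]] by (intro mult_left_mono) auto
  finally show ?thesis by simp
qed

lemma fdens_sum_le1: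
  assumes th: "\<theta> \<in> param_space s" and S: "finite S"
  shows "(\<Sum>y\<in>S. fdens s \<theta> y) \<le> 1"
  using add_mono[OF fdens_psi_sum_le[OF th S] fdens_1psi_sum_le[OF th S]]
  by (simp add: algebra_simps sum.distrib sum_subtractf)

lemma fdens_le1: "\<theta> \<in> param_space s \<Longrightarrow> fdens s \<theta> y \<le> 1"
  using fdens_sum_le1[of \<theta> s "{y}"] by simp

lemma kdens_meas: "(\<lambda>l. kdens s l k) \<in> borel_measurable borel"
  by (cases s) simp_all

lemma fdens_meas: "(\<lambda>\<theta>. fdens s \<theta> y) \<in> borel_measurable borel"
  unfolding fdens_def binom_dens_def
  by (cases s; cases "fst y \<le> snd y"; cases "\<exists>k. s = BinomS k \<and> snd y \<le> k")
     (auto intro!: borel_measurable_continuous_onI continuous_intros)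

lemma fdens_total: "\<theta> \<in> param_space s \<Longrightarrow> (\<integral>\<^sup>+y. ennreal (fdens s \<theta> y) \<partial>count_space UNIV) = 1"
proof -
  assume th: "\<theta> \<in> param_space s"
  let ?f = "\<lambda>y. ennreal (fdens s \<theta> y)"
  have "(\<integral>\<^sup>+y. ?f y \<partial>count_space UNIV) = (\<integral>\<^sup>+y. \<integral>\<^sup>+k. ?f y * indicator {snd y} k \<partial>count_space UNIV \<partial>count_space UNIV)"
    by (simp add: nn_integral_indicator_singleton)
  also have "\<dots> = (\<integral>\<^sup>+k. \<integral>\<^sup>+y. ?f y * indicator {snd y} k \<partial>count_space UNIV \<partial>count_space UNIV)"
    by (rule nn_integral_count_space_nn_integral) auto
  also have "\<dots> = (\<integral>\<^sup>+k. ennreal (kdens s (fst \<theta>) k) \<partial>count_space UNIV)"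
  proof (rule nn_integral_cong)
    fix k :: nat
    have "(\<integral>\<^sup>+y. ?f y * indicator {snd y} k \<partial>count_space UNIV) = (\<Sum>y\<in>{..k}\<times>{k}. ?f y * indicator {snd y} k)"
      by (rule nn_integral_count_space') (auto simp: fdens_def binom_dens_def split: split_indicator)
    also have "\<dots> = (\<Sum>x\<le>k. ennreal (fdens s \<theta> (x, k)))"
    proof -
      have "{..k}\<times>{k} = (\<lambda>x. (x,k)) ` {..k}" by auto
      then show ?thesis by (simp only:) (subst sum.reindex, auto simp: inj_on_def)
    qed
    also have "\<dots> = ennreal (\<Sum>x\<le>k. fdens s \<theta> (x, k))"
      using fdens_nonneg[OF th] by (simp add: sum_ennreal)
    also have "(\<Sum>x\<le>k. fdens s \<theta> (x, k)) = kdens s (fst \<theta>) k"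
      using binom_dens_sum[OF param_snd[OF th], of k] by (simp add: fdens_def sum_distrib_left[symmetric])
    finally show "(\<integral>\<^sup>+y. ?f y * indicator {snd y} k \<partial>count_space UNIV) = ennreal (kdens s (fst \<theta>) k)" .
  qed
  also have "\<dots> = 1"
    using kdens_sums[OF param_fst[OF th]] kdens_nonneg[OF param_fst[OF th]]
    by (simp add: nn_integral_count_space_nat suminf_ennreal2 sums_iff)
  finally show ?thesis .
qed

context
  fixes s G assumes G: "is_param_dist s G"
begin

lemma G_prob: "prob_space G" using G by (simp add: is_param_dist_def)
lemma G_sets: "sets G = sets borel" using G by (simp add: is_param_dist_def)
lemma G_AE: "AE \<theta> in G. \<theta> \<in> param_space s" using G by (simp add: is_param_dist_def)

lemma meas_G: assumes "f \<in> borel_measurable borel" shows "f \<in> borel_measurable G"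
  by (subst measurable_cong_sets[OF G_sets refl]) (rule assms)

lemma integrable_G:
  assumes "f \<in> borel_measurable borel" "AE \<theta> in G. \<theta> \<in> param_space s \<longrightarrow> \<bar>f \<theta>\<bar> \<le> 1"
  shows "integrable G (f :: _ \<Rightarrow> real)"
proof -
  interpret prob_space G by (rule G_prob)
  show ?thesis
  proof (rule integrable_const_bound[where B=1])
    show "AE x in G. norm (f x) \<le> 1" using assms(2) G_AE by eventually_elim auto
    show "f \<in> borel_measurable G" by (rule meas_G[OF assms(1)])
  qed
qed

lemma fdens_int: "integrable G (\<lambda>\<theta>. fdens s \<theta> y)"
proof (rule integrable_G[OF fdens_meas])
  show "AE \<theta> in G. \<theta> \<in> param_space s \<longrightarrow> \<bar>fdens s \<theta> y\<bar> \<le> 1"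
    by (intro AE_I2 impI) (metis abs_of_nonneg fdens_nonneg fdens_le1)
qed

lemma mix_nonneg: "0 \<le> mix s G y"
  unfolding mix_def by (rule integral_nonneg_AE) (use G_AE in eventually_elim, rule fdens_nonneg)

lemma mix_sum: "(\<Sum>y\<in>S. mix s G y) = (\<integral>\<theta>. (\<Sum>y\<in>S. fdens s \<theta> y) \<partial>G)"
  unfolding mix_def by (rule Bochner_Integration.integral_sum[symmetric]) (rule fdens_int)

lemma mix_total: "(\<integral>\<^sup>+y. ennreal (mix s G y) \<partial>count_space UNIV) = 1"
proof -
  interpret prob_space G by (rule G_prob)
  have "(\<integral>\<^sup>+y. ennreal (mix s G y) \<partial>count_space UNIV) = (\<integral>\<^sup>+y. \<integral>\<^sup>+\<theta>. ennreal (fdens s \<theta> y) \<partial>G \<partial>count_space UNIV)"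
    unfolding mix_def
    by (intro nn_integral_cong nn_integral_eq_integral[symmetric] fdens_int)
       (use G_AE in eventually_elim, rule fdens_nonneg)
  also have "\<dots> = (\<integral>\<^sup>+\<theta>. \<integral>\<^sup>+y. ennreal (fdens s \<theta> y) \<partial>count_space UNIV \<partial>G)"
    by (rule nn_integral_count_space_nn_integral[symmetric]) (auto intro!: measurable_compose[OF meas_G[OF fdens_meas] measurable_ennreal])
  also have "\<dots> = (\<integral>\<^sup>+\<theta>. 1 \<partial>G)"
    by (rule nn_integral_cong_AE) (use G_AE in eventually_elim, rule fdens_total)
  also have "\<dots> = 1" by (simp add: emeasure_space_1)
  finally show ?thesis .
qed

definition "QG = embed_pmf (mix s G)"

lemma pmf_Q: "pmf QG y = mix s G y"
  unfolding QG_def by (rule pmf_embed_pmf) (use mix_nonneg mix_total in auto)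

end

lemma rep_nn: "(\<integral>\<^sup>+zs. f zs \<partial>replicate_pmf (Suc n) Q) = (\<integral>\<^sup>+x. \<integral>\<^sup>+xs. f (x#xs) \<partial>replicate_pmf n Q \<partial>Q)"
  by simp

lemma pmf_nn: "ennreal (pmf M x) = (\<integral>\<^sup>+z. indicator {x} z \<partial>measure_pmf M)"
  by (simp add: emeasure_pmf_single)

lemma pmf_rep: "pmf (replicate_pmf n Q) zs = (if length zs = n then prod_list (map (pmf Q) zs) else 0)"
proof (induction n arbitrary: zs)
  case 0 then show ?case by (auto simp: indicator_def)
next
  case (Suc n)
  have "ennreal (pmf (replicate_pmf (Suc n) Q) zs) = (\<integral>\<^sup>+z. indicator {zs} z \<partial>replicate_pmf (Suc n) Q)"
    by (rule pmf_nn)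
  also have "\<dots> = (\<integral>\<^sup>+x. \<integral>\<^sup>+xs. indicator {zs} (x#xs) \<partial>replicate_pmf n Q \<partial>Q)" by (rule rep_nn)
  also have "\<dots> = ennreal (if length zs = Suc n then prod_list (map (pmf Q) zs) else 0)"
  proof (cases zs)
    case Nil then show ?thesis by (simp add: indicator_def)
  next
    case (Cons z zs')
    have "(\<integral>\<^sup>+x. \<integral>\<^sup>+xs. indicator {zs} (x#xs) \<partial>replicate_pmf n Q \<partial>Q)
        = (\<integral>\<^sup>+x. ennreal (pmf (replicate_pmf n Q) zs') * indicator {z} x \<partial>Q)"
    proof (rule nn_integral_cong)
      fix x
      have "(\<integral>\<^sup>+xs. indicator {zs} (x#xs) \<partial>replicate_pmf n Q) = (\<integral>\<^sup>+xs. indicator {z} x * indicator {zs'} xs \<partial>replicate_pmf n Q)"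
        by (rule nn_integral_cong) (auto simp: Cons indicator_def)
      also have "\<dots> = indicator {z} x * emeasure (replicate_pmf n Q) {zs'}"
        by (simp add: nn_integral_cmult)
      finally show "(\<integral>\<^sup>+xs. indicator {zs} (x#xs) \<partial>replicate_pmf n Q) = ennreal (pmf (replicate_pmf n Q) zs') * indicator {z} x"
        by (simp add: emeasure_pmf_single mult.commute)
    qed
    also have "\<dots> = ennreal (pmf (replicate_pmf n Q) zs') * ennreal (pmf Q z)"
      by (simp add: nn_integral_cmult_indicator emeasure_pmf_single)
    also have "\<dots> = ennreal (if length zs = Suc n then prod_list (map (pmf Q) zs) else 0)"
      by (simp add: Suc.IH Cons ennreal_mult'[symmetric] mult.commute)
    finally show ?thesis .
  qed
  finally have e: "ennreal (pmf (replicate_pmf (Suc n) Q) zs) = ennreal (if length zs = Suc n then prod_list (map (pmf Q) zs) else 0)" .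
  have h0: "0 \<le> (if length zs = Suc n then prod_list (map (pmf Q) zs) else 0)"
    by (auto intro!: prod_list_nonneg)
  show ?case by (rule iffD1[OF ennreal_inj[OF pmf_nonneg h0] e])
qed

lemma emeasure_all_in: "emeasure (replicate_pmf n Q) {zs. set zs \<subseteq> S} = emeasure Q S ^ n"
proof (induction n)
  case 0 then show ?case by (simp add: indicator_def)
next
  case (Suc n)
  have "emeasure (replicate_pmf (Suc n) Q) {zs. set zs \<subseteq> S} = (\<integral>\<^sup>+z. indicator {zs. set zs \<subseteq> S} z \<partial>replicate_pmf (Suc n) Q)"
    by simp
  also have "\<dots> = (\<integral>\<^sup>+x. \<integral>\<^sup>+xs. indicator {zs. set zs \<subseteq> S} (x#xs) \<partial>replicate_pmf n Q \<partial>Q)" by (rule rep_nn)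
  also have "\<dots> = (\<integral>\<^sup>+x. emeasure Q S ^ n * indicator S x \<partial>Q)"
  proof (rule nn_integral_cong)
    fix x
    have "(\<integral>\<^sup>+xs. indicator {zs. set zs \<subseteq> S} (x#xs) \<partial>replicate_pmf n Q) = (\<integral>\<^sup>+xs. indicator S x * indicator {zs. set zs \<subseteq> S} xs \<partial>replicate_pmf n Q)"
      by (rule nn_integral_cong) (auto simp: indicator_def)
    also have "\<dots> = indicator S x * emeasure (replicate_pmf n Q) {zs. set zs \<subseteq> S}"
      by (simp add: nn_integral_cmult)
    finally show "(\<integral>\<^sup>+xs. indicator {zs. set zs \<subseteq> S} (x#xs) \<partial>replicate_pmf n Q) = emeasure Q S ^ n * indicator S x"
      by (simp add: Suc.IH mult.commute)
  qed
  also have "\<dots> = emeasure Q S ^ Suc n"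
    by (subst nn_integral_cmult_indicator) (simp_all add: mult.commute)
  finally show ?case .
qed

lemma measure_all_in: "measure (replicate_pmf n Q) {zs. set zs \<subseteq> S} = measure Q S ^ n"
  using emeasure_all_in[of n Q S]
  by (simp add: measure_pmf.emeasure_eq_measure ennreal_power)

lemma measure_not_all_in: "measure (replicate_pmf n Q) {zs. \<not> set zs \<subseteq> S} \<le> real n * (1 - measure Q S)"
proof -
  have "measure (replicate_pmf n Q) {zs. \<not> set zs \<subseteq> S} = 1 - measure Q S ^ n"
    using measure_pmf.prob_compl[of "{zs. set zs \<subseteq> S}" "replicate_pmf n Q"] measure_all_in[of n Q S]
    by (simp add: Compl_eq_Diff_UNIV[symmetric] Collect_neg_eq)
  also have "\<dots> \<le> real n * (1 - measure Q S)"
  proof -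
    have "1 + real n * (measure Q S - 1) \<le> (1 + (measure Q S - 1)) ^ n"
      by (rule Bernoulli_inequality) simp
    moreover have "real n * (measure Q S - 1) = - (real n * (1 - measure Q S))" by (simp add: algebra_simps)
    ultimately show ?thesis by simp
  qed
  finally show ?thesis .
qed

lemma nn_const_pmf: "(\<integral>\<^sup>+x. c \<partial>measure_pmf M) = c"
  by (simp add: measure_pmf.emeasure_space_1)

lemma nn_ind_pmf: "0 \<le> a \<Longrightarrow> (\<integral>\<^sup>+x. ennreal (if x = y then a else 0) \<partial>measure_pmf M) = ennreal (a * pmf M y)"
proof -
  assume that: "0 \<le> a"
  have "(\<integral>\<^sup>+x. ennreal (if x = y then a else 0) \<partial>measure_pmf M) = (\<integral>\<^sup>+x. ennreal a * indicator {y} x \<partial>measure_pmf M)"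
    by (rule nn_integral_cong) (auto simp: indicator_def)
  also have "\<dots> = ennreal a * ennreal (pmf M y)" by (simp add: emeasure_pmf_single)
  also have "\<dots> = ennreal (a * pmf M y)"
    using that by (simp add: ennreal_mult')
  finally show ?thesis .
qed

lemma E_cnt: "(\<integral>\<^sup>+xs. ennreal (real (count_list xs y)) \<partial>replicate_pmf n Q) = ennreal (real n * pmf Q y)"
proof (induction n)
  case 0 then show ?case by simp
next
  case (Suc n)
  have "(\<integral>\<^sup>+xs. ennreal (real (count_list xs y)) \<partial>replicate_pmf (Suc n) Q)
      = (\<integral>\<^sup>+x. \<integral>\<^sup>+xs. ennreal (real (count_list (x#xs) y)) \<partial>replicate_pmf n Q \<partial>Q)" by (rule rep_nn)
  also have "\<dots> = (\<integral>\<^sup>+x. ennreal (if x = y then 1 else 0) + ennreal (real n * pmf Q y) \<partial>Q)"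
  proof (rule nn_integral_cong)
    fix x
    have "(\<integral>\<^sup>+xs. ennreal (real (count_list (x#xs) y)) \<partial>replicate_pmf n Q)
        = (\<integral>\<^sup>+xs. ennreal (if x = y then 1 else 0) + ennreal (real (count_list xs y)) \<partial>replicate_pmf n Q)"
      by (rule nn_integral_cong) (simp add: ennreal_plus[symmetric] del: ennreal_plus)
    also have "\<dots> = ennreal (if x = y then 1 else 0) + ennreal (real n * pmf Q y)"
      by (simp add: nn_integral_add nn_const_pmf Suc.IH del: ennreal_plus)
    finally show "(\<integral>\<^sup>+xs. ennreal (real (count_list (x#xs) y)) \<partial>replicate_pmf n Q) = ennreal (if x = y then 1 else 0) + ennreal (real n * pmf Q y)" .
  qed
  also have "\<dots> = ennreal (pmf Q y) + ennreal (real n * pmf Q y)"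
    by (simp add: nn_integral_add nn_const_pmf nn_ind_pmf del: ennreal_plus)
  also have "\<dots> = ennreal (real (Suc n) * pmf Q y)"
    by (simp add: ennreal_plus[symmetric] algebra_simps del: ennreal_plus)
  finally show ?case .
qed

lemma E_cnt2: "(\<integral>\<^sup>+xs. ennreal (real (count_list xs y) ^ 2) \<partial>replicate_pmf n Q)
   = ennreal (real n * pmf Q y + real n * (real n - 1) * pmf Q y ^ 2)"
proof (induction n)
  case 0 then show ?case by simp
next
  case (Suc n)
  let ?q = "pmf Q y"
  have "(\<integral>\<^sup>+xs. ennreal (real (count_list xs y) ^ 2) \<partial>replicate_pmf (Suc n) Q)
      = (\<integral>\<^sup>+x. \<integral>\<^sup>+xs. ennreal (real (count_list (x#xs) y) ^ 2) \<partial>replicate_pmf n Q \<partial>Q)" by (rule rep_nn)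
  also have "\<dots> = (\<integral>\<^sup>+x. ennreal (if x = y then 1 + 2 * (real n * ?q) else 0) + ennreal (real n * ?q + real n * (real n - 1) * ?q ^ 2) \<partial>Q)"
  proof (rule nn_integral_cong)
    fix x
    have "(\<integral>\<^sup>+xs. ennreal (real (count_list (x#xs) y) ^ 2) \<partial>replicate_pmf n Q)
        = (\<integral>\<^sup>+xs. ennreal (if x = y then 1 else 0) + ennreal (if x = y then 2 else 0) * ennreal (real (count_list xs y)) + ennreal (real (count_list xs y) ^ 2) \<partial>replicate_pmf n Q)"
      by (rule nn_integral_cong)
         (auto simp: ennreal_plus[symmetric] ennreal_mult'[symmetric] power2_eq_square algebra_simps simp del: ennreal_plus)
    also have "\<dots> = ennreal (if x = y then 1 else 0) + ennreal (if x = y then 2 else 0) * ennreal (real n * ?q) + ennreal (real n * ?q + real n * (real n - 1) * ?q ^ 2)"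
      by (simp add: nn_integral_add nn_integral_cmult nn_const_pmf Suc.IH E_cnt del: ennreal_plus)
    also have "\<dots> = ennreal (if x = y then 1 + 2 * (real n * ?q) else 0) + ennreal (real n * ?q + real n * (real n - 1) * ?q ^ 2)"
      by (auto simp: ennreal_plus[symmetric] ennreal_mult'[symmetric] simp del: ennreal_plus)
    finally show "(\<integral>\<^sup>+xs. ennreal (real (count_list (x#xs) y) ^ 2) \<partial>replicate_pmf n Q) = ennreal (if x = y then 1 + 2 * (real n * ?q) else 0) + ennreal (real n * ?q + real n * (real n - 1) * ?q ^ 2)" .
  qed
  also have "\<dots> = ennreal ((1 + 2 * (real n * ?q)) * ?q) + ennreal (real n * ?q + real n * (real n - 1) * ?q ^ 2)"
    by (simp add: nn_integral_add nn_const_pmf nn_ind_pmf del: ennreal_plus)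
  also have "\<dots> = ennreal ((1 + 2 * (real n * ?q)) * ?q + (real n * ?q + real n * (real n - 1) * ?q ^ 2))"
  proof (rule ennreal_plus[symmetric])
    show "0 \<le> (1 + 2 * (real n * ?q)) * ?q" by simp
    show "0 \<le> real n * ?q + real n * (real n - 1) * ?q ^ 2" by (cases n) auto
  qed
  also have "\<dots> = ennreal (real (Suc n) * ?q + real (Suc n) * (real (Suc n) - 1) * ?q ^ 2)"
    by (simp add: algebra_simps power2_eq_square)
  finally show ?case .
qed

lemma E_var: "(\<integral>\<^sup>+xs. ennreal ((real (count_list xs y) - real n * pmf Q y) ^ 2) \<partial>replicate_pmf n Q)
   = ennreal (real n * pmf Q y * (1 - pmf Q y))"
proof -
  let ?q = "pmf Q y" and ?L = "replicate_pmf n Q"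
  let ?V = "\<lambda>xs. (real (count_list xs y) - real n * ?q) ^ 2"
  have "(\<integral>\<^sup>+xs. ennreal (?V xs) + ennreal (2 * real n * ?q) * ennreal (real (count_list xs y)) \<partial>?L)
     = (\<integral>\<^sup>+xs. ennreal (?V xs) \<partial>?L) + (\<integral>\<^sup>+xs. ennreal (2 * real n * ?q) * ennreal (real (count_list xs y)) \<partial>?L)"
    by (rule nn_integral_add) auto
  also have "(\<integral>\<^sup>+xs. ennreal (2 * real n * ?q) * ennreal (real (count_list xs y)) \<partial>?L) = ennreal (2 * real n * ?q) * ennreal (real n * ?q)"
    by (subst nn_integral_cmult) (auto simp: E_cnt)
  also have "ennreal (2 * real n * ?q) * ennreal (real n * ?q) = ennreal (2 * real n * ?q * (real n * ?q))"
    by (simp add: ennreal_mult'[symmetric])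
  finally have "(\<integral>\<^sup>+xs. ennreal (?V xs) \<partial>?L) + ennreal (2 * real n * ?q * (real n * ?q))
      = (\<integral>\<^sup>+xs. ennreal (?V xs) + ennreal (2 * real n * ?q) * ennreal (real (count_list xs y)) \<partial>?L)" by simp
  also have "\<dots> = (\<integral>\<^sup>+xs. ennreal (real (count_list xs y) ^ 2) + ennreal ((real n * ?q)^2) \<partial>?L)"
  proof (rule nn_integral_cong)
    fix xs
    let ?c = "real (count_list xs y)"
    have "ennreal (?V xs) + ennreal (2 * real n * ?q) * ennreal ?c = ennreal (?V xs) + ennreal (2 * real n * ?q * ?c)"
      by (simp add: ennreal_mult'[symmetric])
    also have "\<dots> = ennreal (?V xs + 2 * real n * ?q * ?c)" by (rule ennreal_plus[symmetric]) auto
    also have "?V xs + 2 * real n * ?q * ?c = ?c ^ 2 + (real n * ?q)^2" by (simp add: algebra_simps power2_eq_square)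
    also have "ennreal (?c ^ 2 + (real n * ?q)^2) = ennreal (?c ^ 2) + ennreal ((real n * ?q)^2)" by (rule ennreal_plus) auto
    finally show "ennreal (?V xs) + ennreal (2 * real n * ?q) * ennreal ?c = ennreal (?c ^ 2) + ennreal ((real n * ?q)^2)" .
  qed
  also have "\<dots> = ennreal (real n * ?q + real n * (real n - 1) * ?q ^ 2) + ennreal ((real n * ?q)^2)"
    by (simp add: nn_integral_add nn_const_pmf E_cnt2 del: ennreal_plus)
  also have "\<dots> = ennreal (real n * ?q + real n * (real n - 1) * ?q ^ 2 + (real n * ?q)^2)"
  proof (rule ennreal_plus[symmetric])
    show "0 \<le> real n * ?q + real n * (real n - 1) * ?q ^ 2" by (cases n) auto
  qed simp
  also have "\<dots> = ennreal (real n * ?q * (1 - ?q) + 2 * real n * ?q * (real n * ?q))"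
    by (simp add: algebra_simps power2_eq_square)
  also have "\<dots> = ennreal (real n * ?q * (1 - ?q)) + ennreal (2 * real n * ?q * (real n * ?q))"
    by (rule ennreal_plus) (auto simp: pmf_le_1)
  finally show ?thesis by (simp add: ennreal_add_left_cancel)
qed

definition chi :: "'a set \<Rightarrow> 'a pmf \<Rightarrow> nat \<Rightarrow> 'a list \<Rightarrow> real" where
  "chi S Q n xs = (\<Sum>y\<in>S. (real (count_list xs y) - real n * pmf Q y) ^ 2 / (real n ^ 2 * pmf Q y))"

lemma E_chi:
  assumes S: "finite S" and n: "n > 0" and pos: "\<And>y. y \<in> S \<Longrightarrow> pmf Q y > 0"
  shows "(\<integral>\<^sup>+xs. ennreal (chi S Q n xs) \<partial>replicate_pmf n Q) \<le> ennreal (real (card S) / real n)"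
proof -
  let ?L = "replicate_pmf n Q"
  have "(\<integral>\<^sup>+xs. ennreal (chi S Q n xs) \<partial>?L) = (\<integral>\<^sup>+xs. (\<Sum>y\<in>S. ennreal ((real (count_list xs y) - real n * pmf Q y) ^ 2 / (real n ^ 2 * pmf Q y))) \<partial>?L)"
    unfolding chi_def by (intro nn_integral_cong sum_ennreal[symmetric]) (auto intro!: divide_nonneg_nonneg)
  also have "\<dots> = (\<Sum>y\<in>S. \<integral>\<^sup>+xs. ennreal ((real (count_list xs y) - real n * pmf Q y) ^ 2 / (real n ^ 2 * pmf Q y)) \<partial>?L)"
    by (rule nn_integral_sum) auto
  also have "\<dots> = (\<Sum>y\<in>S. ennreal ((1 - pmf Q y) / real n))"
  proof (rule sum.cong[OF refl])
    fix y assume y: "y \<in> S"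
    have "(\<integral>\<^sup>+xs. ennreal ((real (count_list xs y) - real n * pmf Q y) ^ 2 / (real n ^ 2 * pmf Q y)) \<partial>?L)
        = (\<integral>\<^sup>+xs. ennreal (1 / (real n ^ 2 * pmf Q y)) * ennreal ((real (count_list xs y) - real n * pmf Q y) ^ 2) \<partial>?L)"
      by (rule nn_integral_cong) (simp add: ennreal_mult'[symmetric])
    also have "\<dots> = ennreal (1 / (real n ^ 2 * pmf Q y)) * ennreal (real n * pmf Q y * (1 - pmf Q y))"
      by (subst nn_integral_cmult) (auto simp: E_var)
    also have "\<dots> = ennreal ((1 - pmf Q y) / real n)"
    proof -
      have "1 / (real n ^ 2 * pmf Q y) * (real n * pmf Q y * (1 - pmf Q y)) = (1 - pmf Q y) / real n"
        using pos[OF y] n by (simp add: power2_eq_square field_simps)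
      then show ?thesis by (simp add: ennreal_mult'[symmetric])
    qed
    finally show "(\<integral>\<^sup>+xs. ennreal ((real (count_list xs y) - real n * pmf Q y) ^ 2 / (real n ^ 2 * pmf Q y)) \<partial>?L) = ennreal ((1 - pmf Q y) / real n)" .
  qed
  also have "\<dots> \<le> (\<Sum>y\<in>S. ennreal (1 / real n))"
    by (intro sum_mono ennreal_leI divide_right_mono) (auto simp: pmf_nonneg)
  also have "\<dots> = ennreal (real (card S) / real n)"
    by (simp add: ennreal_of_nat_eq_real_of_nat ennreal_mult'[symmetric])
  finally show ?thesis .
qed

lemma P_chi:
  assumes S: "finite S" and n: "n > 0" and pos: "\<And>y. y \<in> S \<Longrightarrow> pmf Q y > 0" and u: "u > 0"
  shows "measure (replicate_pmf n Q) {xs. u < chi S Q n xs} \<le> real (card S) / (real n * u)"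
proof -
  let ?L = "replicate_pmf n Q" and ?A = "{xs. u < chi S Q n xs}"
  have "ennreal u * emeasure ?L ?A = (\<integral>\<^sup>+xs. ennreal u * indicator ?A xs \<partial>?L)"
    by (simp add: nn_integral_cmult_indicator)
  also have "\<dots> \<le> (\<integral>\<^sup>+xs. ennreal (chi S Q n xs) \<partial>?L)"
    by (rule nn_integral_mono) (auto simp: indicator_def intro!: ennreal_leI)
  also have "\<dots> \<le> ennreal (real (card S) / real n)" by (rule E_chi[OF S n pos])
  finally have "ennreal (u * measure ?L ?A) \<le> ennreal (real (card S) / real n)"
    using u by (simp add: measure_pmf.emeasure_eq_measure ennreal_mult'[symmetric])
  then have "u * measure ?L ?A \<le> real (card S) / real n"
    by (subst (asm) ennreal_le_iff) auto
  then show ?thesis using u n by (simp add: field_simps)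
qed

lemma cs_sum: "(\<Sum>i\<in>A. u i * v i) \<le> sqrt (\<Sum>i\<in>A. (u i)\<^sup>2) * sqrt (\<Sum>i\<in>A. (v i)\<^sup>2)"
proof -
  have "(\<Sum>i\<in>A. u i * v i) \<le> (\<Sum>i\<in>A. \<bar>u i\<bar> * \<bar>v i\<bar>)"
    by (intro sum_mono) (simp add: abs_mult[symmetric])
  also have "\<dots> \<le> L2_set u A * L2_set v A" by (rule L2_set_mult_ineq)
  finally show ?thesis by (simp add: L2_set_def)
qed

lemma cs_abs: "(\<Sum>i\<in>A. \<bar>u i\<bar> * \<bar>v i\<bar>) \<le> sqrt (\<Sum>i\<in>A. (u i)\<^sup>2) * sqrt (\<Sum>i\<in>A. (v i)\<^sup>2)"
  using L2_set_mult_ineq[of u v A] by (simp add: L2_set_def)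

lemma quad_bound:
  fixes H c t :: real
  assumes "H \<ge> 0" "c \<ge> 0" "t \<ge> 0" "H\<^sup>2 \<le> 2 * c * H + t"
  shows "H \<le> 2 * c + sqrt t"
proof (rule ccontr)
  assume "\<not> ?thesis"
  then have h: "H > 2 * c + sqrt t" by simp
  have "sqrt t * H \<ge> sqrt t * sqrt t" using h assms by (intro mult_left_mono) auto
  then have "sqrt t * H \<ge> t" using assms by simp
  have "H * H > H * (2 * c + sqrt t)" using h assms
    by (intro mult_strict_left_mono) (auto intro: order.strict_trans1[OF _ h])
  then have "H\<^sup>2 > 2 * c * H + sqrt t * H" by (simp add: power2_eq_square algebra_simps)
  with \<open>sqrt t * H \<ge> t\<close> assms(4) show False by simp
qed

lemma hellinger_bound:
  fixes a b e :: "'a \<Rightarrow> real"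
  assumes S: "finite S"
    and a: "\<And>y. y \<in> S \<Longrightarrow> a y > 0" and b: "\<And>y. y \<in> S \<Longrightarrow> b y \<ge> 0" and e: "\<And>y. y \<in> S \<Longrightarrow> e y \<ge> 0"
    and se: "(\<Sum>y\<in>S. e y) = 1" and sa: "(\<Sum>y\<in>S. (a y)\<^sup>2) = 1 - t" and t: "t \<ge> 0"
    and sb: "(\<Sum>y\<in>S. (b y)\<^sup>2) \<le> 1"
    and mle: "0 \<le> (\<Sum>y\<in>S. e y * (b y / a y - 1))"
  defines "X \<equiv> (\<Sum>y\<in>S. (e y - (a y)\<^sup>2)\<^sup>2 / (a y)\<^sup>2)"
  shows "(\<Sum>y\<in>S. \<bar>e y - (b y)\<^sup>2\<bar>) + (1 - (\<Sum>y\<in>S. (b y)\<^sup>2))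
           \<le> 5 * sqrt X + 4 * X + 2 * sqrt t + 2 * sqrt X * sqrt t + t"
proof -
  define H where "H = sqrt (\<Sum>y\<in>S. (b y - a y)\<^sup>2)"
  define c where "c = sqrt X"
  define \<beta> where "\<beta> = 1 - (\<Sum>y\<in>S. (b y)\<^sup>2)"
  have H0: "H \<ge> 0" unfolding H_def by (auto intro: sum_nonneg)
  have chi0: "X \<ge> 0" unfolding X_def by (intro sum_nonneg divide_nonneg_nonneg) auto
  have c0: "c \<ge> 0" unfolding c_def using chi0 by simp
  have cc: "c\<^sup>2 = X" unfolding c_def using chi0 by simp
  have beta0: "\<beta> \<ge> 0" using sb by (simp add: \<beta>_def)
  have chi_alt: "X = (\<Sum>y\<in>S. ((e y - (a y)\<^sup>2) / a y)\<^sup>2)"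
    unfolding X_def by (simp add: power_divide)
  have split: "(\<Sum>y\<in>S. e y * (b y / a y - 1)) = (\<Sum>y\<in>S. a y * b y - (a y)\<^sup>2) + (\<Sum>y\<in>S. ((e y - (a y)\<^sup>2) / a y) * (b y - a y))"
    unfolding sum.distrib[symmetric]
  proof (rule sum.cong[OF refl])
    fix y assume "y \<in> S"
    with a[of y] show "e y * (b y / a y - 1) = a y * b y - (a y)\<^sup>2 + (e y - (a y)\<^sup>2) / a y * (b y - a y)"
      by (simp add: field_simps power2_eq_square)
  qed
  have cs1: "(\<Sum>y\<in>S. ((e y - (a y)\<^sup>2) / a y) * (b y - a y)) \<le> c * H"
    unfolding c_def H_def chi_alt by (rule cs_sum)
  have hel: "(\<Sum>y\<in>S. a y * b y - (a y)\<^sup>2) = - (H\<^sup>2 / 2) + ((\<Sum>y\<in>S. (b y)\<^sup>2) - (\<Sum>y\<in>S. (a y)\<^sup>2)) / 2"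
  proof -
    have H2: "H\<^sup>2 = (\<Sum>y\<in>S. (b y - a y)\<^sup>2)" unfolding H_def by (simp add: sum_nonneg)
    have "(\<Sum>y\<in>S. a y * b y - (a y)\<^sup>2) = (\<Sum>y\<in>S. ((b y)\<^sup>2 - (a y)\<^sup>2) / 2 - (b y - a y)\<^sup>2 / 2)"
      by (rule sum.cong) (auto simp: power2_eq_square field_simps)
    also have "\<dots> = ((\<Sum>y\<in>S. (b y)\<^sup>2) - (\<Sum>y\<in>S. (a y)\<^sup>2)) / 2 - (\<Sum>y\<in>S. (b y - a y)\<^sup>2) / 2"
      by (simp only: sum_subtractf sum_divide_distrib[symmetric])
    finally show ?thesis using H2 by simp
  qed
  have key: "H\<^sup>2 + \<beta> \<le> 2 * (c * H) + t"
  proof -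
    let ?A = "(\<Sum>y\<in>S. a y * b y - (a y)\<^sup>2)" and ?B = "(\<Sum>y\<in>S. ((e y - (a y)\<^sup>2) / a y) * (b y - a y))"
    have "0 \<le> ?A + ?B" using mle split by simp
    then have "0 \<le> - (H\<^sup>2 / 2) + ((\<Sum>y\<in>S. (b y)\<^sup>2) - (1 - t)) / 2 + c * H" using cs1 hel sa by simp
    then show ?thesis unfolding \<beta>_def by (simp add: field_simps)
  qed
  have Hb: "H \<le> 2 * c + sqrt t"
    by (rule quad_bound[OF H0 c0 t]) (use key beta0 in \<open>simp add: mult.assoc\<close>)
  have betab: "\<beta> \<le> 2 * (c * H) + t" using key H0 by (smt (verit) zero_le_power2)
  have d1: "(\<Sum>y\<in>S. \<bar>e y - (a y)\<^sup>2\<bar>) \<le> c"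
  proof -
    have "(\<Sum>y\<in>S. \<bar>e y - (a y)\<^sup>2\<bar>) = (\<Sum>y\<in>S. \<bar>(e y - (a y)\<^sup>2) / a y\<bar> * \<bar>a y\<bar>)"
    proof (rule sum.cong[OF refl])
      fix y assume "y \<in> S"
      with a[of y] show "\<bar>e y - (a y)\<^sup>2\<bar> = \<bar>(e y - (a y)\<^sup>2) / a y\<bar> * \<bar>a y\<bar>"
        by (simp add: abs_divide)
    qed
    also have "\<dots> \<le> sqrt X * sqrt (\<Sum>y\<in>S. (a y)\<^sup>2)" unfolding chi_alt by (rule cs_abs)
    also have "\<dots> \<le> sqrt X * 1" using sa t chi0 by (intro mult_left_mono) auto
    finally show ?thesis by (simp add: c_def)
  qed
  have d2: "(\<Sum>y\<in>S. \<bar>(a y)\<^sup>2 - (b y)\<^sup>2\<bar>) \<le> 2 * H"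
  proof -
    have "(\<Sum>y\<in>S. \<bar>(a y)\<^sup>2 - (b y)\<^sup>2\<bar>) = (\<Sum>y\<in>S. \<bar>b y - a y\<bar> * \<bar>a y + b y\<bar>)"
      by (rule sum.cong) (auto simp: abs_mult[symmetric] power2_eq_square algebra_simps abs_minus_commute)
    also have "\<dots> \<le> H * sqrt (\<Sum>y\<in>S. (a y + b y)\<^sup>2)" unfolding H_def by (rule cs_abs)
    also have "\<dots> \<le> H * 2"
    proof (rule mult_left_mono[OF _ H0])
      have "(\<Sum>y\<in>S. (a y + b y)\<^sup>2) \<le> (\<Sum>y\<in>S. 2 * (a y)\<^sup>2 + 2 * (b y)\<^sup>2)"
      proof (rule sum_mono)
        fix y
        have "0 \<le> (a y - b y)\<^sup>2" by simp
        then show "(a y + b y)\<^sup>2 \<le> 2 * (a y)\<^sup>2 + 2 * (b y)\<^sup>2" by (simp add: power2_eq_square algebra_simps)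
      qed
      also have "\<dots> \<le> 4" using sa sb t by (simp add: sum.distrib sum_distrib_left[symmetric])
      finally have "(\<Sum>y\<in>S. (a y + b y)\<^sup>2) \<le> 2\<^sup>2" by simp
      then have "sqrt (\<Sum>y\<in>S. (a y + b y)\<^sup>2) \<le> sqrt (2\<^sup>2)" by (rule real_sqrt_le_mono)
      then show "sqrt (\<Sum>y\<in>S. (a y + b y)\<^sup>2) \<le> 2" by simp
    qed
    finally show ?thesis by simp
  qed
  have "(\<Sum>y\<in>S. \<bar>e y - (b y)\<^sup>2\<bar>) \<le> (\<Sum>y\<in>S. \<bar>e y - (a y)\<^sup>2\<bar> + \<bar>(a y)\<^sup>2 - (b y)\<^sup>2\<bar>)"
    by (rule sum_mono) simp
  also have "\<dots> \<le> c + 2 * H" using d1 d2 by (simp add: sum.distrib)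
  finally have "(\<Sum>y\<in>S. \<bar>e y - (b y)\<^sup>2\<bar>) + \<beta> \<le> c + 2 * H + 2 * c * H + t" using betab by (simp add: mult.assoc)
  also have "\<dots> \<le> c + 2 * (2 * c + sqrt t) + 2 * c * (2 * c + sqrt t) + t"
    using Hb c0 by (intro add_mono mult_left_mono order.refl) auto
  also have "\<dots> = 5 * c + 4 * c\<^sup>2 + 2 * sqrt t + 2 * c * sqrt t + t" by (simp add: power2_eq_square algebra_simps)
  also have "\<dots> = 5 * sqrt X + 4 * X + 2 * sqrt t + 2 * sqrt X * sqrt t + t" using cc by (simp add: c_def)
  finally show ?thesis by (simp add: \<beta>_def)
qed

lemma snd_meas: "(\<lambda>\<theta>::real\<times>real. snd \<theta>) \<in> borel_measurable borel"
  by (rule borel_measurable_continuous_onI) (rule continuous_on_snd[OF continuous_on_id])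

lemma psi_meas: "(\<lambda>\<theta>::real\<times>real. psi_th (snd \<theta>) y) \<in> borel_measurable borel"
  unfolding psi_th_def by (cases "snd y > 0") (simp_all add: snd_meas)

lemma mix_pos_le: "mix s G y > 0 \<Longrightarrow> fst y \<le> snd y"
  by (rule ccontr) (simp add: mix_def fdens_zero)

context
  fixes s G assumes G: "is_param_dist s G"
begin

lemma fpsi_int: "integrable G (\<lambda>\<theta>. fdens s \<theta> y * psi_th (snd \<theta>) y)"
proof (rule integrable_G[OF G])
  show "(\<lambda>\<theta>. fdens s \<theta> y * psi_th (snd \<theta>) y) \<in> borel_measurable borel"
    using fdens_meas psi_meas by (rule borel_measurable_times)
  show "AE \<theta> in G. \<theta> \<in> param_space s \<longrightarrow> \<bar>fdens s \<theta> y * psi_th (snd \<theta>) y\<bar> \<le> 1"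
  proof (intro AE_I2 impI)
    fix \<theta> assume th: "\<theta> \<in> param_space s"
    show "\<bar>fdens s \<theta> y * psi_th (snd \<theta>) y\<bar> \<le> 1"
    proof (cases "fdens s \<theta> y = 0")
      case False
      then show ?thesis using fdens_nonneg[OF th] fdens_le1[OF th] psi_le1[OF th False] psi_nonneg[OF th]
        by (simp add: abs_mult mult_le_one)
    qed simp
  qed
qed

lemma snd_int: "integrable G (\<lambda>\<theta>. snd \<theta>)"
  by (rule integrable_G[OF G]) (auto intro!: AE_I2 snd_meas dest: param_snd)

lemma k0_int: "integrable G (\<lambda>\<theta>. kdens s (fst \<theta>) 0)"
  using fdens_int[OF G, of "(0,0)"] by (simp add: fdens_def binom_dens_def)

lemma pk0_int: "integrable G (\<lambda>\<theta>. snd \<theta> * kdens s (fst \<theta>) 0)"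
  using fpsi_int[of "(0,0)"] by (simp add: fdens_def binom_dens_def psi_th_def mult.commute)

lemma cm_range: "0 \<le> cond_mean_K0 s G \<and> cond_mean_K0 s G \<le> 1"
proof -
  let ?A = "\<integral>\<theta>. snd \<theta> * kdens s (fst \<theta>) 0 \<partial>G" and ?B = "\<integral>\<theta>. kdens s (fst \<theta>) 0 \<partial>G"
  have A0: "0 \<le> ?A"
    by (rule integral_nonneg_AE) (use G_AE[OF G] in \<open>eventually_elim, auto intro!: mult_nonneg_nonneg dest: param_snd kdens_nonneg[OF param_fst]\<close>)
  have AB: "?A \<le> ?B"
  proof (rule integral_mono_AE[OF pk0_int k0_int])
    show "AE \<theta> in G. snd \<theta> * kdens s (fst \<theta>) 0 \<le> kdens s (fst \<theta>) 0"
      using G_AE[OF G]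
    proof eventually_elim
      case (elim \<theta>)
      then show ?case using param_snd[OF elim] kdens_nonneg[OF param_fst[OF elim], of 0]
        by (simp add: mult_left_le_one_le)
    qed
  qed
  show ?thesis
    unfolding cond_mean_K0_def using A0 AB by (cases "?B = 0") (auto simp: divide_le_eq_1)
qed

lemma mix_psi: "mix s G y * Psi_star s G y = (\<integral>\<theta>. fdens s \<theta> y * psi_th (snd \<theta>) y \<partial>G)"
proof (cases "snd y > 0")
  case True
  then show ?thesis by (simp add: mix_def Psi_star_def psi_th_def)
next
  case False
  then have k0: "snd y = 0" by simp
  show ?thesis
  proof (cases "fst y > 0")
    case True
    then show ?thesis using k0 by (simp add: mix_def fdens_zero)
  next
    case False
    then have y: "y = (0, 0)" using k0 by (cases y) auto
    let ?A = "\<integral>\<theta>. snd \<theta> * kdens s (fst \<theta>) 0 \<partial>G" and ?B = "\<integral>\<theta>. kdens s (fst \<theta>) 0 \<partial>G"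
    have A0: "0 \<le> ?A"
      by (rule integral_nonneg_AE) (use G_AE[OF G] in \<open>eventually_elim, auto intro!: mult_nonneg_nonneg dest: param_snd kdens_nonneg[OF param_fst]\<close>)
    have AB: "?A \<le> ?B"
    proof (rule integral_mono_AE[OF pk0_int k0_int])
      show "AE \<theta> in G. snd \<theta> * kdens s (fst \<theta>) 0 \<le> kdens s (fst \<theta>) 0"
        using G_AE[OF G]
      proof eventually_elim
        case (elim \<theta>)
        then show ?case using param_snd[OF elim] kdens_nonneg[OF param_fst[OF elim], of 0]
          by (simp add: mult_left_le_one_le)
      qed
    qed
    have "mix s G y * Psi_star s G y = ?B * (?A / ?B)"
      by (simp add: y mix_def Psi_star_def cond_mean_K0_def fdens_def binom_dens_def)
    also have "\<dots> = ?A" using A0 AB by (cases "?B = 0") auto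
    also have "\<dots> = (\<integral>\<theta>. fdens s \<theta> y * psi_th (snd \<theta>) y \<partial>G)"
      by (simp add: y fdens_def binom_dens_def psi_th_def mult.commute)
    finally show ?thesis .
  qed
qed

lemma mix_sum_le1: "finite S \<Longrightarrow> (\<Sum>y\<in>S. mix s G y) \<le> 1"
proof -
  assume S: "finite S"
  interpret prob_space G by (rule G_prob[OF G])
  have "(\<Sum>y\<in>S. mix s G y) = (\<integral>\<theta>. (\<Sum>y\<in>S. fdens s \<theta> y) \<partial>G)" by (rule mix_sum[OF G])
  also have "\<dots> \<le> (\<integral>\<theta>. 1 \<partial>G)"
  proof (rule integral_mono_AE)
    show "integrable G (\<lambda>\<theta>. \<Sum>y\<in>S. fdens s \<theta> y)" by (intro Bochner_Integration.integrable_sum fdens_int[OF G])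
    show "AE \<theta> in G. (\<Sum>y\<in>S. fdens s \<theta> y) \<le> 1"
      using G_AE[OF G] by eventually_elim (rule fdens_sum_le1[OF _ S])
  qed simp
  finally show ?thesis by (simp add: prob_space)
qed

lemma eta_bounds:
  assumes S: "finite S"
  shows "0 \<le> eta_hat G - (\<Sum>y\<in>S. mix s G y * Psi_star s G y)"
    and "eta_hat G - (\<Sum>y\<in>S. mix s G y * Psi_star s G y) \<le> 1 - (\<Sum>y\<in>S. mix s G y)"
proof -
  interpret prob_space G by (rule G_prob[OF G])
  have i1: "integrable G (\<lambda>\<theta>. \<Sum>y\<in>S. fdens s \<theta> y * psi_th (snd \<theta>) y)" by (intro Bochner_Integration.integrable_sum fpsi_int)
  have i2: "integrable G (\<lambda>\<theta>. \<Sum>y\<in>S. fdens s \<theta> y)" by (intro Bochner_Integration.integrable_sum fdens_int[OF G])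
  have e: "eta_hat G - (\<Sum>y\<in>S. mix s G y * Psi_star s G y) = (\<integral>\<theta>. snd \<theta> - (\<Sum>y\<in>S. fdens s \<theta> y * psi_th (snd \<theta>) y) \<partial>G)"
    unfolding eta_hat_def mix_psi
    by (subst Bochner_Integration.integral_sum[symmetric], rule fpsi_int, rule Bochner_Integration.integral_diff[symmetric, OF snd_int i1])
  show "0 \<le> eta_hat G - (\<Sum>y\<in>S. mix s G y * Psi_star s G y)"
    unfolding e by (rule integral_nonneg_AE) (use G_AE[OF G] in \<open>eventually_elim, use fdens_psi_sum_le[OF _ S] in auto\<close>)
  have "(\<integral>\<theta>. snd \<theta> - (\<Sum>y\<in>S. fdens s \<theta> y * psi_th (snd \<theta>) y) \<partial>G) \<le> (\<integral>\<theta>. 1 - (\<Sum>y\<in>S. fdens s \<theta> y) \<partial>G)"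
  proof (rule integral_mono_AE)
    show "integrable G (\<lambda>\<theta>. snd \<theta> - (\<Sum>y\<in>S. fdens s \<theta> y * psi_th (snd \<theta>) y))" using snd_int i1 by simp
    show "integrable G (\<lambda>\<theta>. 1 - (\<Sum>y\<in>S. fdens s \<theta> y))" using i2 by simp
    show "AE \<theta> in G. snd \<theta> - (\<Sum>y\<in>S. fdens s \<theta> y * psi_th (snd \<theta>) y) \<le> 1 - (\<Sum>y\<in>S. fdens s \<theta> y)"
      using G_AE[OF G]
    proof eventually_elim
      case (elim \<theta>)
      have "(\<Sum>y\<in>S. fdens s \<theta> y * (1 - psi_th (snd \<theta>) y)) \<le> 1 - snd \<theta>" by (rule fdens_1psi_sum_le[OF elim S])
      then show ?case by (simp add: algebra_simps sum_subtractf)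
    qed
  qed
  also have "\<dots> = 1 - (\<Sum>y\<in>S. mix s G y)"
    using i2 by (simp add: mix_sum[OF G] prob_space)
  finally show "eta_hat G - (\<Sum>y\<in>S. mix s G y * Psi_star s G y) \<le> 1 - (\<Sum>y\<in>S. mix s G y)" unfolding e .
qed

end

lemma prod_list_count:
  assumes "set xs \<subseteq> S" "finite S"
  shows "prod_list (map h xs) = (\<Prod>y\<in>S. h y ^ count_list xs y)"
  using assms(1)
proof (induction xs)
  case Nil then show ?case by simp
next
  case (Cons x xs)
  have x: "x \<in> S" using Cons.prems by simp
  have "(\<Prod>y\<in>S. h y ^ count_list (x#xs) y) = (\<Prod>y\<in>S. (if x = y then h y else 1) * h y ^ count_list xs y)"
    by (rule prod.cong) auto
  also have "\<dots> = (\<Prod>y\<in>S. (if x = y then h y else 1)) * (\<Prod>y\<in>S. h y ^ count_list xs y)"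
    by (rule prod.distrib)
  also have "(\<Prod>y\<in>S. (if x = y then h y else 1)) = h x"
    using x assms(2) by (simp add: prod.delta)
  finally show ?case using Cons by simp
qed

lemma ln_le_sqrt: "r > 0 \<Longrightarrow> ln r \<le> 2 * (sqrt r - 1)"
proof -
  assume r: "r > 0"
  have "ln r = 2 * ln (sqrt r)" using r by (simp add: ln_sqrt)
  also have "\<dots> \<le> 2 * (sqrt r - 1)" using r by (intro mult_left_mono ln_le_minus_one) auto
  finally show ?thesis .
qed

lemma gmle_ineq:
  fixes f g :: "'a \<Rightarrow> real"
  assumes S: "finite S" and sub: "set ys \<subseteq> S" and fpos: "\<And>y. y \<in> S \<Longrightarrow> f y > 0"
    and gnn: "\<And>y. g y \<ge> 0"
    and lik: "prod_list (map f ys) \<le> prod_list (map g ys)"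
  shows "0 \<le> (\<Sum>y\<in>S. real (count_list ys y) * (sqrt (g y) / sqrt (f y) - 1))"
proof -
  let ?c = "\<lambda>y. count_list ys y"
  have Pf: "prod_list (map f ys) = (\<Prod>y\<in>S. f y ^ ?c y)" by (rule prod_list_count[OF sub S])
  have Pg: "prod_list (map g ys) = (\<Prod>y\<in>S. g y ^ ?c y)" by (rule prod_list_count[OF sub S])
  have fP: "(\<Prod>y\<in>S. f y ^ ?c y) > 0" using fpos by (intro prod_pos) auto
  have gP: "(\<Prod>y\<in>S. g y ^ ?c y) > 0" using fP lik Pf Pg by linarith
  have gpos: "g y > 0" if "y \<in> S" "?c y > 0" for y
  proof (rule ccontr)
    assume "\<not> g y > 0"
    then have "g y = 0" using gnn[of y] by simp
    then have "(\<Prod>y\<in>S. g y ^ ?c y) = 0" using that S by (intro prod_zero) (auto intro!: bexI[of _ y])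
    with gP show False by simp
  qed
  have "1 \<le> (\<Prod>y\<in>S. g y ^ ?c y) / (\<Prod>y\<in>S. f y ^ ?c y)" using fP lik Pf Pg by simp
  also have "\<dots> = (\<Prod>y\<in>S. (g y / f y) ^ ?c y)" by (simp add: prod_dividef power_divide)
  finally have "0 \<le> ln (\<Prod>y\<in>S. (g y / f y) ^ ?c y)" by simp
  also have "\<dots> = (\<Sum>y\<in>S. ln ((g y / f y) ^ ?c y))"
  proof (rule ln_prod[OF S])
    fix y assume y: "y \<in> S"
    show "(g y / f y) ^ ?c y \<noteq> 0"
      using gpos[OF y] fpos[OF y] by (cases "?c y = 0") auto
  qed
  also have "\<dots> = (\<Sum>y\<in>S. real (?c y) * ln (g y / f y))" by (simp add: ln_realpow)
  also have "\<dots> \<le> (\<Sum>y\<in>S. real (?c y) * (2 * (sqrt (g y / f y) - 1)))"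
  proof (rule sum_mono)
    fix y assume y: "y \<in> S"
    show "real (?c y) * ln (g y / f y) \<le> real (?c y) * (2 * (sqrt (g y / f y) - 1))"
    proof (cases "?c y = 0")
      case False
      then show ?thesis using gpos[OF y] fpos[OF y] by (intro mult_left_mono ln_le_sqrt) auto
    qed simp
  qed
  also have "\<dots> = 2 * (\<Sum>y\<in>S. real (count_list ys y) * (sqrt (g y) / sqrt (f y) - 1))"
    by (simp add: sum_distrib_left real_sqrt_divide algebra_simps)
  finally show ?thesis by simp
qed

lemma sum_list_count_real:
  assumes "set xs \<subseteq> X" "finite X"
  shows "sum_list (map f xs) = (\<Sum>x\<in>X. real (count_list xs x) * (f x :: real))"
  using assms(1)
proof (induction xs)
  case Nil then show ?case by simp
next
  case (Cons z xs)
  have z: "z \<in> X" using Cons.prems by simp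
  have "(\<Sum>x\<in>X. real (count_list (z#xs) x) * f x) = (\<Sum>x\<in>X. (if z = x then f x else 0) + real (count_list xs x) * f x)"
    by (rule sum.cong) (auto simp: algebra_simps)
  also have "\<dots> = f z + (\<Sum>x\<in>X. real (count_list xs x) * f x)"
    using z assms(2) by (simp add: sum.distrib sum.delta)
  finally show ?case using Cons by simp
qed

lemma eta_tilde_sum:
  assumes S: "finite S" and sub: "set ys \<subseteq> S"
  shows "eta_tilde s Gh ys = (\<Sum>y\<in>S. real (count_list ys y) / real (length ys) * Psi_star s Gh y)"
proof -
  have "sum_list (map (Psi_star s Gh) ys) = (\<Sum>y\<in>S. real (count_list ys y) * Psi_star s Gh y)"
    by (rule sum_list_count_real[OF sub S])
  then show ?thesis by (simp add: eta_tilde_def sum_divide_distrib)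
qed

definition Bnd :: "real \<Rightarrow> real \<Rightarrow> real" where
  "Bnd X t = 5 * sqrt X + 4 * X + 2 * sqrt t + 2 * sqrt X * sqrt t + t"

lemma D_bound:
  assumes G: "is_param_dist s G" and Gh: "is_GMLE s ys Gh" and S: "finite S"
    and sub: "set ys \<subseteq> S" and ne: "ys \<noteq> []" and pos: "\<And>y. y \<in> S \<Longrightarrow> mix s G y > 0"
  shows "\<bar>eta_tilde s Gh ys - eta_hat Gh\<bar> \<le> Bnd (chi S (QG s G) (length ys) ys) (1 - (\<Sum>y\<in>S. mix s G y))"
proof -
  define n where "n = length ys"
  have n: "n > 0" using ne by (simp add: n_def)
  define e where "e y = real (count_list ys y) / real n" for y
  define f where "f = mix s G"
  define g where "g = mix s Gh"
  define t where "t = 1 - (\<Sum>y\<in>S. f y)"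
  have Ghd: "is_param_dist s Gh" using Gh by (simp add: is_GMLE_def)
  have lik: "lik s G ys \<le> lik s Gh ys" using Gh G by (simp add: is_GMLE_def)
  have gnn: "g y \<ge> 0" for y unfolding g_def by (rule mix_nonneg[OF Ghd])
  have fpos: "y \<in> S \<Longrightarrow> f y > 0" for y using pos by (simp add: f_def)
  have Psi01: "0 \<le> Psi_star s Gh y \<and> Psi_star s Gh y \<le> 1" if "y \<in> S" for y
  proof (cases "snd y > 0")
    case True
    have "fst y \<le> snd y" using mix_pos_le[OF pos[OF that]] .
    then show ?thesis using True by (simp add: Psi_star_def)
  next
    case False
    then show ?thesis using cm_range[OF Ghd] by (simp add: Psi_star_def)
  qed
  have et: "eta_tilde s Gh ys = (\<Sum>y\<in>S. e y * Psi_star s Gh y)"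
    unfolding e_def n_def by (rule eta_tilde_sum[OF S sub])
  have eb1: "0 \<le> eta_hat Gh - (\<Sum>y\<in>S. g y * Psi_star s Gh y)"
    and eb2: "eta_hat Gh - (\<Sum>y\<in>S. g y * Psi_star s Gh y) \<le> 1 - (\<Sum>y\<in>S. g y)"
    using eta_bounds[OF Ghd S] by (simp_all add: g_def)
  have "\<bar>(\<Sum>y\<in>S. (e y - g y) * Psi_star s Gh y)\<bar> \<le> (\<Sum>y\<in>S. \<bar>(e y - g y) * Psi_star s Gh y\<bar>)"
    by (rule sum_abs)
  also have "\<dots> \<le> (\<Sum>y\<in>S. \<bar>e y - g y\<bar>)"
  proof (rule sum_mono)
    fix y assume y: "y \<in> S"
    show "\<bar>(e y - g y) * Psi_star s Gh y\<bar> \<le> \<bar>e y - g y\<bar>"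
      using Psi01[OF y] by (simp add: abs_mult mult_left_le)
  qed
  finally have t1: "\<bar>(\<Sum>y\<in>S. (e y - g y) * Psi_star s Gh y)\<bar> \<le> (\<Sum>y\<in>S. \<bar>e y - g y\<bar>)" .
  have "eta_tilde s Gh ys - eta_hat Gh = (\<Sum>y\<in>S. (e y - g y) * Psi_star s Gh y) - (eta_hat Gh - (\<Sum>y\<in>S. g y * Psi_star s Gh y))"
    by (simp add: et algebra_simps sum_subtractf)
  then have Dle: "\<bar>eta_tilde s Gh ys - eta_hat Gh\<bar> \<le> (\<Sum>y\<in>S. \<bar>e y - g y\<bar>) + (1 - (\<Sum>y\<in>S. g y))"
    using t1 eb1 eb2 by linarith
  have sq_f: "(sqrt (f y))\<^sup>2 = f y" if "y \<in> S" for y using fpos[OF that] by simp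
  have sq_g: "(sqrt (g y))\<^sup>2 = g y" for y using gnn[of y] by simp
  have hb: "(\<Sum>y\<in>S. \<bar>e y - (sqrt (g y))\<^sup>2\<bar>) + (1 - (\<Sum>y\<in>S. (sqrt (g y))\<^sup>2))
      \<le> 5 * sqrt (\<Sum>y\<in>S. (e y - (sqrt (f y))\<^sup>2)\<^sup>2 / (sqrt (f y))\<^sup>2) + 4 * (\<Sum>y\<in>S. (e y - (sqrt (f y))\<^sup>2)\<^sup>2 / (sqrt (f y))\<^sup>2)
         + 2 * sqrt t + 2 * sqrt (\<Sum>y\<in>S. (e y - (sqrt (f y))\<^sup>2)\<^sup>2 / (sqrt (f y))\<^sup>2) * sqrt t + t"
  proof (rule hellinger_bound[OF S])
    show "\<And>y. y \<in> S \<Longrightarrow> 0 < sqrt (f y)" using fpos by simp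
    show "\<And>y. y \<in> S \<Longrightarrow> 0 \<le> sqrt (g y)" using gnn by simp
    show "\<And>y. y \<in> S \<Longrightarrow> 0 \<le> e y" by (simp add: e_def)
    show "(\<Sum>y\<in>S. e y) = 1"
      using sum_count_set[OF sub S] n unfolding e_def n_def
      by (simp add: sum_divide_distrib[symmetric] of_nat_sum[symmetric])
    show "(\<Sum>y\<in>S. (sqrt (f y))\<^sup>2) = 1 - t" using sq_f by (simp add: t_def)
    show "0 \<le> t" using mix_sum_le1[OF G S] by (simp add: t_def f_def)
    show "(\<Sum>y\<in>S. (sqrt (g y))\<^sup>2) \<le> 1" using mix_sum_le1[OF Ghd S] sq_g by (simp add: g_def)
    have "0 \<le> (\<Sum>y\<in>S. real (count_list ys y) * (sqrt (g y) / sqrt (f y) - 1))"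
    proof (rule gmle_ineq[OF S sub fpos gnn])
      show "prod_list (map f ys) \<le> prod_list (map g ys)" using lik by (simp add: lik_def f_def g_def)
    qed
    then have "0 \<le> (\<Sum>y\<in>S. real (count_list ys y) * (sqrt (g y) / sqrt (f y) - 1)) / real n"
      by simp
    then show "0 \<le> (\<Sum>y\<in>S. e y * (sqrt (g y) / sqrt (f y) - 1))"
      by (simp add: e_def sum_divide_distrib)
  qed
  have chi_eq: "(\<Sum>y\<in>S. (e y - (sqrt (f y))\<^sup>2)\<^sup>2 / (sqrt (f y))\<^sup>2) = chi S (QG s G) n ys"
    unfolding chi_def
  proof (rule sum.cong[OF refl])
    fix y assume y: "y \<in> S"
    have pq: "pmf (QG s G) y = f y" by (simp add: pmf_Q[OF G] f_def)
    show "(e y - (sqrt (f y))\<^sup>2)\<^sup>2 / (sqrt (f y))\<^sup>2 = (real (count_list ys y) - real n * pmf (QG s G) y)\<^sup>2 / ((real n)\<^sup>2 * pmf (QG s G) y)"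
      using fpos[OF y] n unfolding pq sq_f[OF y] e_def by (simp add: field_simps power2_eq_square)
  qed
  have hb2: "(\<Sum>y\<in>S. \<bar>e y - g y\<bar>) + (1 - (\<Sum>y\<in>S. g y)) \<le> Bnd (chi S (QG s G) n ys) t"
    using hb unfolding chi_eq sq_g Bnd_def .
  have "\<bar>eta_tilde s Gh ys - eta_hat Gh\<bar> \<le> Bnd (chi S (QG s G) n ys) t" using Dle hb2 by linarith
  then show ?thesis by (simp add: n_def t_def f_def)
qed

lemma data_prob_eq:
  assumes G: "is_param_dist s G"
  shows "data_prob s G n A = measure (replicate_pmf n (QG s G)) A"
proof -
  let ?L = "replicate_pmf n (QG s G)"
  have "measure ?L A = infsum (pmf ?L) A"
    by (simp add: measure_pmf_conv_infsetsum infsetsum_infsum pmf_abs_summable)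
  also have "\<dots> = infsum (lik s G) {ys \<in> A. length ys = n}"
    by (rule infsum_cong_neutral) (auto simp: pmf_rep lik_def pmf_Q[OF G] intro!: arg_cong[where f=prod_list])
  finally show ?thesis by (simp add: data_prob_def)
qed

lemma Bnd_mono: "0 \<le> X \<Longrightarrow> X \<le> u \<Longrightarrow> 0 \<le> t \<Longrightarrow> Bnd X t \<le> Bnd u t"
  unfolding Bnd_def
  by (intro add_mono mult_left_mono mult_right_mono real_sqrt_le_mono order.refl) auto

lemma chi_nonneg: "(\<And>y. y \<in> S \<Longrightarrow> pmf P y > 0) \<Longrightarrow> 0 \<le> chi S P n xs"
  unfolding chi_def by (intro sum_nonneg divide_nonneg_nonneg) auto

lemma event_bound:
  assumes G: "is_param_dist s G" and GM: "\<And>ys. is_GMLE s ys (Ghat ys)"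
    and S: "finite S" and pos: "\<And>y. y \<in> S \<Longrightarrow> mix s G y > 0"
    and n: "n > 0" and u: "u > 0"
    and thr: "Bnd u (1 - (\<Sum>y\<in>S. mix s G y)) \<le> thr"
  shows "data_prob s G n {ys. \<bar>eta_tilde s (Ghat ys) ys - eta_hat (Ghat ys)\<bar> > thr}
          \<le> real n * (1 - (\<Sum>y\<in>S. mix s G y)) + real (card S) / (real n * u)"
proof -
  let ?Q = "QG s G"
  let ?L = "replicate_pmf n ?Q"
  let ?E = "{ys. \<bar>eta_tilde s (Ghat ys) ys - eta_hat (Ghat ys)\<bar> > thr}"
  have pq: "pmf ?Q y = mix s G y" for y by (rule pmf_Q[OF G])
  have posQ: "y \<in> S \<Longrightarrow> pmf ?Q y > 0" for y using pos by (simp add: pq)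
  have t0: "0 \<le> 1 - (\<Sum>y\<in>S. mix s G y)" using mix_sum_le1[OF G S] by simp
  have sub: "?E \<subseteq> {zs. \<not> set zs \<subseteq> S} \<union> {xs. u < chi S ?Q n xs} \<union> {zs. length zs \<noteq> n}"
  proof
    fix ys assume ys: "ys \<in> ?E"
    show "ys \<in> {zs. \<not> set zs \<subseteq> S} \<union> {xs. u < chi S ?Q n xs} \<union> {zs. length zs \<noteq> n}"
    proof (rule ccontr)
      assume "\<not> ?thesis"
      then have a: "set ys \<subseteq> S" "chi S ?Q n ys \<le> u" "length ys = n" by auto
      then have ne: "ys \<noteq> []" using n by auto
      have "\<bar>eta_tilde s (Ghat ys) ys - eta_hat (Ghat ys)\<bar> \<le> Bnd (chi S ?Q (length ys) ys) (1 - (\<Sum>y\<in>S. mix s G y))"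
        by (rule D_bound[OF G GM S a(1) ne pos])
      also have "\<dots> \<le> Bnd u (1 - (\<Sum>y\<in>S. mix s G y))"
        using a by (intro Bnd_mono chi_nonneg t0) (auto intro: posQ)
      finally show False using ys thr by simp
    qed
  qed
  have z: "measure ?L {zs. length zs \<noteq> n} = 0"
    by (subst measure_pmf_zero_iff) (auto simp: set_replicate_pmf)
  have "data_prob s G n ?E = measure ?L ?E" by (rule data_prob_eq[OF G])
  also have "\<dots> \<le> measure ?L ({zs. \<not> set zs \<subseteq> S} \<union> {xs. u < chi S ?Q n xs} \<union> {zs. length zs \<noteq> n})"
    by (rule measure_pmf.finite_measure_mono[OF sub]) simp
  also have "\<dots> \<le> measure ?L ({zs. \<not> set zs \<subseteq> S} \<union> {xs. u < chi S ?Q n xs}) + measure ?L {zs. length zs \<noteq> n}"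
    by (rule measure_Un_le) simp_all
  also have "\<dots> \<le> measure ?L {zs. \<not> set zs \<subseteq> S} + measure ?L {xs. u < chi S ?Q n xs}"
    using z measure_Un_le[of "{zs. \<not> set zs \<subseteq> S}" ?L "{xs. u < chi S ?Q n xs}"] by simp
  also have "\<dots> \<le> real n * (1 - measure ?Q S) + real (card S) / (real n * u)"
    by (intro add_mono measure_not_all_in P_chi[OF S n posQ u])
  also have "measure ?Q S = (\<Sum>y\<in>S. mix s G y)"
    by (simp add: measure_measure_pmf_finite[OF S] pq)
  finally show ?thesis .
qed

lemma ev_ln_ge: "eventually (\<lambda>n::nat. ln (real n) \<ge> B) sequentially"
proof -
  have "eventually (\<lambda>n::nat. n \<ge> nat \<lceil>exp B\<rceil> + 1) sequentially" by (rule eventually_ge_at_top)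
  then show ?thesis
  proof eventually_elim
    case (elim n)
    then have "real n \<ge> exp B" by linarith
    then have "ln (real n) \<ge> ln (exp B)" by (intro ln_mono) auto
    then show ?case by simp
  qed
qed

lemma ln_le_2sqrt: "x > 0 \<Longrightarrow> ln x \<le> 2 * sqrt x"
proof -
  assume x: "x > 0"
  have "ln x = 2 * ln (sqrt x)" using x by (simp add: ln_sqrt)
  also have "\<dots> \<le> 2 * (sqrt x - 1)" using x by (intro mult_left_mono ln_le_minus_one) auto
  finally show ?thesis by simp
qed

lemma ev_u_le1: "K > 0 \<Longrightarrow> eventually (\<lambda>n::nat. K * ln (real n) / real n \<le> 1) sequentially"
proof -
  assume K: "K > 0"
  have "eventually (\<lambda>n::nat. n \<ge> nat \<lceil>4 * K\<^sup>2\<rceil> + 1) sequentially" by (rule eventually_ge_at_top)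
  then show ?thesis
  proof eventually_elim
    case (elim n)
    then have n4: "real n \<ge> 4 * K\<^sup>2" by linarith
    have npos: "real n > 0" using elim by simp
    have "sqrt (real n) \<ge> sqrt (4 * K\<^sup>2)" using n4 by (rule real_sqrt_le_mono)
    then have sq: "sqrt (real n) \<ge> 2 * K" using K by (simp add: real_sqrt_mult)
    have "K * ln (real n) \<le> K * (2 * sqrt (real n))" using K npos by (intro mult_left_mono ln_le_2sqrt) auto
    also have "\<dots> = (2 * K) * sqrt (real n)" by simp
    also have "\<dots> \<le> sqrt (real n) * sqrt (real n)" by (rule mult_right_mono[OF sq]) simp
    also have "\<dots> = real n" using npos by simp
    finally show ?case using npos by simp
  qed
qed

lemma Bnd_simple:
  assumes "0 \<le> u" "u \<le> 1" "0 \<le> t" "t \<le> 1"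
  shows "Bnd u t \<le> 10 * sqrt u + 4 * sqrt t"
proof -
  have "u * u \<le> u * 1" using assms by (intro mult_left_mono) auto
  then have a: "u \<le> sqrt u" by (intro real_le_rsqrt) (simp add: power2_eq_square)
  have "t * t \<le> t * 1" using assms by (intro mult_left_mono) auto
  then have b: "t \<le> sqrt t" by (intro real_le_rsqrt) (simp add: power2_eq_square)
  have c: "2 * sqrt u * sqrt t \<le> u + t"
  proof -
    have "0 \<le> (sqrt u - sqrt t)\<^sup>2" by simp
    then show ?thesis using assms by (simp add: power2_eq_square algebra_simps)
  qed
  show ?thesis using a b c unfolding Bnd_def by linarith
qed

lemma pois_thr:
  fixes K \<delta> \<alpha> \<tau> :: real and n :: nat
  assumes K: "K > 0" and d: "\<delta> > 0" and al: "\<alpha> > 0" and n: "n > 0"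
    and L1: "ln (real n) \<ge> 1" and LB: "ln (real n) \<ge> (20 * sqrt K / \<delta>) powr (2 / \<alpha>)"
    and u1: "K * ln (real n) / real n \<le> 1" and t0: "0 \<le> \<tau>" and t1: "\<tau> \<le> 1"
    and tn: "\<tau> \<le> (\<delta> / 8)\<^sup>2 / real n"
  shows "Bnd (K * ln (real n) / real n) \<tau> \<le> \<delta> * (ln (real n) powr ((1 + \<alpha>) / 2) / sqrt (real n))"
proof -
  define L where "L = ln (real n)"
  have Lp: "L > 0" using L1 by (simp add: L_def)
  have np: "real n > 0" using n by simp
  have u0: "0 \<le> K * L / real n" using K Lp np by simp
  have B1: "Bnd (K * L / real n) \<tau> \<le> 10 * sqrt (K * L / real n) + 4 * sqrt \<tau>"
    by (rule Bnd_simple[OF u0 _ t0 t1]) (use u1 in \<open>simp add: L_def\<close>)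
  have B2: "sqrt (K * L / real n) = sqrt K * sqrt L / sqrt (real n)" by (simp add: real_sqrt_mult real_sqrt_divide)
  have B3: "sqrt \<tau> \<le> (\<delta> / 8) / sqrt (real n)"
  proof -
    have "sqrt \<tau> \<le> sqrt ((\<delta> / 8)\<^sup>2 / real n)" using tn by (rule real_sqrt_le_mono)
    also have "\<dots> = (\<delta> / 8) / sqrt (real n)" using d by (simp add: real_sqrt_divide)
    finally show ?thesis .
  qed
  have split: "L powr ((1 + \<alpha>) / 2) = sqrt L * L powr (\<alpha> / 2)"
    using Lp by (simp add: powr_add[symmetric] powr_half_sqrt[symmetric] add_divide_distrib)
  have big: "L powr (\<alpha> / 2) \<ge> 20 * sqrt K / \<delta>"
  proof -
    have "L powr (\<alpha> / 2) \<ge> ((20 * sqrt K / \<delta>) powr (2 / \<alpha>)) powr (\<alpha> / 2)"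
      using LB al by (intro powr_mono2) (auto simp: L_def)
    also have "((20 * sqrt K / \<delta>) powr (2 / \<alpha>)) powr (\<alpha> / 2) = 20 * sqrt K / \<delta>"
      using K d al by (simp add: powr_powr)
    finally show ?thesis .
  qed
  have Lge1: "L powr ((1 + \<alpha>) / 2) \<ge> 1" using L1 al by (simp add: L_def ge_one_powr_ge_zero)
  have "10 * (sqrt K * sqrt L / sqrt (real n)) \<le> (\<delta> / 2) * (L powr ((1 + \<alpha>) / 2) / sqrt (real n))"
  proof -
    have "20 * sqrt K \<le> \<delta> * L powr (\<alpha> / 2)" using big d by (simp add: field_simps)
    then have "20 * sqrt K * sqrt L \<le> \<delta> * L powr (\<alpha> / 2) * sqrt L" using Lp by (intro mult_right_mono) auto
    then show ?thesis using np by (simp add: split field_simps)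
  qed
  moreover have "4 * ((\<delta> / 8) / sqrt (real n)) \<le> (\<delta> / 2) * (L powr ((1 + \<alpha>) / 2) / sqrt (real n))"
  proof -
    have "\<delta> / 2 \<le> (\<delta> / 2) * L powr ((1 + \<alpha>) / 2)" using Lge1 d by simp
    then show ?thesis using np by (simp add: field_simps)
  qed
  ultimately have "Bnd (K * L / real n) \<tau> \<le> \<delta> * (L powr ((1 + \<alpha>) / 2) / sqrt (real n))"
    using B1 B2 B3 by linarith
  then show ?thesis by (simp add: L_def)
qed

lemma binom_support: "s = BinomS \<kappa> \<Longrightarrow> mix s G y > 0 \<Longrightarrow> y \<in> {..\<kappa>}\<times>{..\<kappa>}"
proof -
  assume s: "s = BinomS \<kappa>" and p: "mix s G y > 0"
  have a: "fst y \<le> snd y" by (rule mix_pos_le[OF p])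
  have b: "snd y \<le> \<kappa>"
  proof (rule ccontr)
    assume "\<not> snd y \<le> \<kappa>"
    then have "mix s G y = 0" by (simp add: s mix_def fdens_def)
    with p show False by simp
  qed
  show ?thesis using a b by (cases y) auto
qed

context
  fixes s G assumes G: "is_param_dist s G"
begin

lemma measure_Q_compl: "measure (QG s G) (- S) = 1 - measure (QG s G) S"
  using measure_pmf.prob_compl[of S "QG s G"] by (simp add: Compl_eq_Diff_UNIV)

lemma full_support_sum:
  assumes S: "finite S" and sub: "{y. mix s G y > 0} \<subseteq> S"
  shows "(\<Sum>y\<in>S. mix s G y) = 1"
proof -
  have "y \<in> S" if y: "y \<in> set_pmf (QG s G)" for y
  proof -
    have "pmf (QG s G) y \<noteq> 0" using y by (simp add: set_pmf_iff)
    then have "mix s G y > 0" using mix_nonneg[OF G, of y] by (simp add: pmf_Q[OF G])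
    with sub show "y \<in> S" by auto
  qed
  then have "set_pmf (QG s G) \<inter> - S = {}" by blast
  then have "measure (QG s G) (- S) = 0" by (simp add: measure_pmf_zero_iff)
  then have "measure (QG s G) S = 1" using measure_Q_compl[of S] by simp
  then show ?thesis by (simp add: measure_measure_pmf_finite[OF S] pmf_Q[OF G])
qed

lemma tail_sum:
  assumes S: "finite S"
  shows "1 - (\<Sum>y\<in>S. mix s G y) = infsum (mix s G) (- S)"
proof -
  have "measure (QG s G) (- S) = infsum (pmf (QG s G)) (- S)"
    by (simp add: measure_pmf_conv_infsetsum infsetsum_infsum pmf_abs_summable)
  also have "pmf (QG s G) = mix s G" by (rule ext) (rule pmf_Q[OF G])
  finally show ?thesis using measure_Q_compl[of S] by (simp add: measure_measure_pmf_finite[OF S] pmf_Q[OF G])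
qed

lemma finite_level:
  assumes c: "c > 0"
  shows "finite {y. c \<le> mix s G y}"
proof (rule ccontr)
  assume inf: "\<not> finite {y. c \<le> mix s G y}"
  obtain B where B: "finite B" "card B = nat \<lceil>1 / c\<rceil> + 1" "B \<subseteq> {y. c \<le> mix s G y}"
    using infinite_arbitrarily_large[OF inf] by blast
  have "real (card B) * c \<le> (\<Sum>y\<in>B. mix s G y)"
    using B(3) sum_mono[of B "\<lambda>_. c" "mix s G"] by auto
  also have "\<dots> \<le> 1" by (rule mix_sum_le1[OF G B(1)])
  finally have "real (card B) * c \<le> 1" .
  moreover have "real (card B) > 1 / c" using B(2) by linarith
  then have "real (card B) * c > 1" using c by (simp add: field_simps)
  ultimately show False by simp
qed

end

lemma binom_case:
  assumes G: "is_param_dist s G" and s: "s = BinomS \<kappa>"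
    and GM: "\<And>ys. is_GMLE s ys (Ghat ys)"
  shows "bigOp s G (\<lambda>n ys. eta_tilde s (Ghat ys) ys - eta_hat (Ghat ys)) (\<lambda>n. 1 / sqrt (real n))"
  unfolding bigOp_def
proof (intro allI impI)
  fix \<epsilon> :: real assume e: "\<epsilon> > 0"
  define S where "S = {y. mix s G y > 0}"
  have Sfin: "finite S"
    by (rule finite_subset[of _ "{..\<kappa>}\<times>{..\<kappa>}"]) (auto simp: S_def dest: binom_support[OF s])
  have pos: "\<And>y. y \<in> S \<Longrightarrow> mix s G y > 0" by (simp add: S_def)
  have sum1: "(\<Sum>y\<in>S. mix s G y) = 1" by (rule full_support_sum[OF G Sfin]) (simp add: S_def)
  define M' where "M' = (real (card S) + 1) / \<epsilon>"
  have M'pos: "M' > 0" using e by (simp add: M'_def)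
  define M where "M = 5 * sqrt M' + 4 * M'"
  show "\<exists>M N. \<forall>n\<ge>N. data_prob s G n {ys. \<bar>eta_tilde s (Ghat ys) ys - eta_hat (Ghat ys)\<bar> > M * (1 / sqrt (real n))} < \<epsilon>"
  proof (intro exI allI impI)
    fix n :: nat assume n1: "n \<ge> 1"
    then have n: "n > 0" by simp
    have np: "real n > 0" using n by simp
    have u: "M' / real n > 0" using M'pos np by simp
    have sqn: "sqrt (real n) \<le> real n"
    proof -
      have "sqrt (real n) * 1 \<le> sqrt (real n) * sqrt (real n)" using n1 by (intro mult_left_mono) auto
      then show ?thesis using np by simp
    qed
    have thr: "Bnd (M' / real n) (1 - (\<Sum>y\<in>S. mix s G y)) \<le> M * (1 / sqrt (real n))"
    proof -
      have "Bnd (M' / real n) (1 - (\<Sum>y\<in>S. mix s G y)) = 5 * (sqrt M' / sqrt (real n)) + 4 * (M' / real n)"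
        by (simp add: Bnd_def sum1 real_sqrt_divide)
      also have "M' / real n \<le> M' / sqrt (real n)"
        using sqn M'pos np by (intro divide_left_mono) auto
      finally show ?thesis by (simp add: M_def add_divide_distrib)
    qed
    have "data_prob s G n {ys. \<bar>eta_tilde s (Ghat ys) ys - eta_hat (Ghat ys)\<bar> > M * (1 / sqrt (real n))}
        \<le> real n * (1 - (\<Sum>y\<in>S. mix s G y)) + real (card S) / (real n * (M' / real n))"
      by (rule event_bound[OF G GM Sfin pos n u thr])
    also have "\<dots> = real (card S) / M'" using np by (simp add: sum1)
    also have "\<dots> = real (card S) * \<epsilon> / (real (card S) + 1)" using e by (simp add: M'_def)
    also have "\<dots> < \<epsilon>" using e by (simp add: field_simps)
    finally show "data_prob s G n {ys. \<bar>eta_tilde s (Ghat ys) ys - eta_hat (Ghat ys)\<bar> > M * (1 / sqrt (real n))} < \<epsilon>" .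
  qed
qed

lemma pois_case:
  assumes G: "is_param_dist s G"
    and GM: "\<And>ys. is_GMLE s ys (Ghat ys)"
    and tail: "\<exists>eps :: nat \<Rightarrow> real. (\<forall>n. eps n > 0) \<and> eps \<longlonglongrightarrow> 0 \<and>
        (\<lambda>n. infsum (mix s G) (- {y. mix s G y \<ge> eps n / real n})) \<in> o(\<lambda>n. 1 / real n) \<and>
        (\<lambda>n. real (card {y. mix s G y \<ge> eps n / real n})) \<in> O(\<lambda>n. ln (real n))"
    and al: "\<alpha> > 0"
  shows "littleOp s G (\<lambda>n ys. eta_tilde s (Ghat ys) ys - eta_hat (Ghat ys))
                            (\<lambda>n. ln (real n) powr ((1 + \<alpha>) / 2) / sqrt (real n))"
  unfolding littleOp_def
proof (intro allI impI)
  fix \<delta> \<epsilon> :: real assume d: "\<delta> > 0" and e: "\<epsilon> > 0"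
  obtain eps :: "nat \<Rightarrow> real" where ep: "\<forall>n. eps n > 0"
    and to: "(\<lambda>n. infsum (mix s G) (- {y. mix s G y \<ge> eps n / real n})) \<in> o(\<lambda>n. 1 / real n)"
    and co: "(\<lambda>n. real (card {y. mix s G y \<ge> eps n / real n})) \<in> O(\<lambda>n. ln (real n))"
    using tail by blast
  define S where "S n = {y. mix s G y \<ge> eps n / real n}" for n
  define \<tau> where "\<tau> n = infsum (mix s G) (- S n)" for n
  obtain C where C: "C > 0" and evC: "eventually (\<lambda>n. norm (real (card (S n))) \<le> C * norm (ln (real n))) sequentially"
    using landau_o.bigE[OF co] unfolding S_def by blast
  define c where "c = min (\<epsilon> / 4) ((\<delta> / 8)\<^sup>2)"
  have c: "c > 0" using e d by (simp add: c_def)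
  have evT: "eventually (\<lambda>n. norm (\<tau> n) \<le> c * norm (1 / real n)) sequentially"
    using landau_o.smallD[OF to c] unfolding \<tau>_def S_def .
  define K where "K = 4 * C / \<epsilon>"
  have K: "K > 0" using C e by (simp add: K_def)
  define B0 where "B0 = (20 * sqrt K / \<delta>) powr (2 / \<alpha>)"
  have ev: "eventually (\<lambda>n. n > 0 \<and> ln (real n) \<ge> 1 \<and> ln (real n) \<ge> B0 \<and> K * ln (real n) / real n \<le> 1
      \<and> norm (\<tau> n) \<le> c * norm (1 / real n) \<and> norm (real (card (S n))) \<le> C * norm (ln (real n))) sequentially"
    by (intro eventually_conj evT evC ev_ln_ge ev_u_le1[OF K] eventually_gt_at_top)
  then obtain N where N: "\<And>n. n \<ge> N \<Longrightarrow> n > 0 \<and> ln (real n) \<ge> 1 \<and> ln (real n) \<ge> B0 \<and> K * ln (real n) / real n \<le> 1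
      \<and> norm (\<tau> n) \<le> c * norm (1 / real n) \<and> norm (real (card (S n))) \<le> C * norm (ln (real n))"
    unfolding eventually_sequentially by blast
  show "\<exists>N. \<forall>n\<ge>N. data_prob s G n {ys. \<bar>eta_tilde s (Ghat ys) ys - eta_hat (Ghat ys)\<bar>
            > \<delta> * (ln (real n) powr ((1 + \<alpha>) / 2) / sqrt (real n))} < \<epsilon>"
  proof (intro exI allI impI)
    fix n assume "n \<ge> N"
    note Nn = N[OF this]
    have n: "n > 0" and L1: "ln (real n) \<ge> 1" and LB: "ln (real n) \<ge> B0" and u1: "K * ln (real n) / real n \<le> 1"
      and tb: "norm (\<tau> n) \<le> c * norm (1 / real n)" and cb: "norm (real (card (S n))) \<le> C * norm (ln (real n))"
      using Nn by auto
    have np: "real n > 0" using n by simp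
    have thp: "eps n / real n > 0" using ep np by simp
    have Sfin: "finite (S n)" unfolding S_def using finite_level[OF G thp] by simp
    have pos: "\<And>y. y \<in> S n \<Longrightarrow> mix s G y > 0" using thp by (auto simp: S_def)
    have teq: "1 - (\<Sum>y\<in>S n. mix s G y) = \<tau> n" unfolding \<tau>_def by (rule tail_sum[OF G Sfin])
    have t0: "0 \<le> \<tau> n" using mix_sum_le1[OF G Sfin] teq by simp
    have t1: "\<tau> n \<le> 1" using teq sum_nonneg[of "S n" "mix s G"] mix_nonneg[OF G] by simp
    have tc: "\<tau> n \<le> c / real n" using tb t0 np by simp
    have tn: "\<tau> n \<le> (\<delta> / 8)\<^sup>2 / real n"
      using tc np by (smt (verit, best) c_def divide_right_mono min.cobounded2)
    have ntau: "real n * \<tau> n \<le> \<epsilon> / 4"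
    proof -
      have "real n * \<tau> n \<le> real n * (c / real n)" using tc np by (intro mult_left_mono) auto
      also have "\<dots> = c" using np by simp
      finally show ?thesis unfolding c_def by simp
    qed
    have Lp: "ln (real n) > 0" using L1 by simp
    define u where "u = K * ln (real n) / real n"
    have u: "u > 0" using K Lp np by (simp add: u_def)
    have thr: "Bnd u (1 - (\<Sum>y\<in>S n. mix s G y)) \<le> \<delta> * (ln (real n) powr ((1 + \<alpha>) / 2) / sqrt (real n))"
      unfolding teq u_def by (rule pois_thr[OF K d al n L1 LB[unfolded B0_def] u1 t0 t1 tn])
    have "data_prob s G n {ys. \<bar>eta_tilde s (Ghat ys) ys - eta_hat (Ghat ys)\<bar> > \<delta> * (ln (real n) powr ((1 + \<alpha>) / 2) / sqrt (real n))}
        \<le> real n * (1 - (\<Sum>y\<in>S n. mix s G y)) + real (card (S n)) / (real n * u)"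
      by (rule event_bound[OF G GM Sfin pos n u thr])
    also have "real (card (S n)) / (real n * u) = real (card (S n)) / (K * ln (real n))"
      using np by (simp add: u_def)
    also have "\<dots> \<le> C * ln (real n) / (K * ln (real n))"
      using cb Lp K by (intro divide_right_mono) auto
    also have "\<dots> = \<epsilon> / 4" using Lp C e by (simp add: K_def field_simps)
    finally show "data_prob s G n {ys. \<bar>eta_tilde s (Ghat ys) ys - eta_hat (Ghat ys)\<bar> > \<delta> * (ln (real n) powr ((1 + \<alpha>) / 2) / sqrt (real n))} < \<epsilon>"
      using ntau teq e by simp
  qed
qed

theorem corollary2:
  fixes s :: sampling and G :: "(real \<times> real) measure"
    and Ghat :: "(nat \<times> nat) list \<Rightarrow> (real \<times> real) measure"
  assumes kappa: "\<And>\<kappa>. s = BinomS \<kappa> \<Longrightarrow> \<kappa> \<ge> 1"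
    and G: "is_param_dist s G"
    and bounded: "\<exists>B. AE \<theta> in G. norm \<theta> \<le> B"
    and tail: "\<exists>eps :: nat \<Rightarrow> real. (\<forall>n. eps n > 0) \<and> eps \<longlonglongrightarrow> 0 \<and>
        (\<lambda>n. infsum (mix s G) (- {y. mix s G y \<ge> eps n / real n})) \<in> o(\<lambda>n. 1 / real n) \<and>
        (\<lambda>n. real (card {y. mix s G y \<ge> eps n / real n})) \<in> O(\<lambda>n. ln (real n))"
    and GMLE: "\<And>ys. is_GMLE s ys (Ghat ys)"
  shows "(case s of
            BinomS \<kappa> \<Rightarrow> bigOp s G (\<lambda>n ys. eta_tilde s (Ghat ys) ys - eta_hat (Ghat ys))
                            (\<lambda>n. 1 / sqrt (real n))
          | PoisS \<Rightarrow> (\<forall>\<alpha>>0. littleOp s G (\<lambda>n ys. eta_tilde s (Ghat ys) ys - eta_hat (Ghat ys))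
                            (\<lambda>n. ln (real n) powr ((1 + \<alpha>) / 2) / sqrt (real n))))"
proof (cases s)
  case (BinomS \<kappa>)
  then show ?thesis using binom_case[OF G BinomS GMLE] by simp
next
  case PoisS
  have "\<forall>\<alpha>>0. littleOp s G (\<lambda>n ys. eta_tilde s (Ghat ys) ys - eta_hat (Ghat ys))
                            (\<lambda>n. ln (real n) powr ((1 + \<alpha>) / 2) / sqrt (real n))"
    using pois_case[OF G GMLE tail] by blast
  then show ?thesis using PoisS by simp
qed

end
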